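(* Let $p\in(1,2)$, let $h=h(r)$ satisfy $h/r^{p/(p-1)}\to0$ as $r\to0^+$, and let $\phi(x)=|x|^\beta$ on $\mathbb{R}^d$ with $\beta>p/(p-1)$. Then \[ \lim_{r\to0,\ x\to0}\Delta_p^h\phi(x)=0 . \]
   Context: $J_p(t)=|t|^{p-2}t$ ($J_p(0)=0$); $B_r$ open ball of radius $r$ at $0$; $\omega_d=|B_1|$; $D_{d,p}=\frac{d}{2(d+p)}\fint_{\partial B_1}|y_1|^p\,d\sigma(y)$; $\mathcal G_h=h\mathbb Z^d=\{y_\alpha=h\alpha:\alpha\in\mathbb Z^d\}$; and \[ \Delta_p^h\phi(x):=\frac{h^d}{D_{d,p}\,\omega_d\,r^{p+d}}\sum_{y_\alpha\in\mathcal G_h\cap B_r}J_p\big(\phi(x+y_\alpha)-\phi(x)\big). \] *)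

theory Defs
  imports "HOL-Analysis.Analysis"
begin

definition Jp :: "real \<Rightarrow> real \<Rightarrow> real" where
  "Jp p t = (if t = 0 then 0 else \<bar>t\<bar> powr (p - 2) * t)"

definition omega :: "'n::finite itself \<Rightarrow> real" where
  "omega _ = measure lborel (ball (0::real^'n) 1)"

text \<open>Spherical average of |y_1|^p over the unit sphere of R^d, d = CARD('n).
  Since no surface measure is available, it is expressed through polar coordinates:
  int_{B_1} |y_1|^p dy = |dB_1| / (d+p) * avg_{dB_1} |y_1|^p and |dB_1| = d omega_d.
  The "first coordinate" is a fixed (arbitrary) coordinate index; by symmetry the
  value does not depend on the choice.\<close>
definition sphere_avg_pow :: "'n::finite itself \<Rightarrow> real \<Rightarrow> real" where
  "sphere_avg_pow T p =
     (real CARD('n) + p) / (real CARD('n) * omega T) *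
       integral (ball (0::real^'n) 1) (\<lambda>y. \<bar>y $ (SOME i::'n. True)\<bar> powr p)"

definition Ddp :: "'n::finite itself \<Rightarrow> real \<Rightarrow> real" where
  "Ddp T p = real CARD('n) / (2 * (real CARD('n) + p)) * sphere_avg_pow T p"

definition grid :: "real \<Rightarrow> (real^'n) set" where
  "grid h = {y. \<forall>i. \<exists>k::int. y $ i = h * of_int k}"

definition discrete_pLap ::
  "real \<Rightarrow> real \<Rightarrow> real \<Rightarrow> (real^'n \<Rightarrow> real) \<Rightarrow> real^'n \<Rightarrow> real" where
  "discrete_pLap p h r \<phi> x =
     h ^ CARD('n) / (Ddp TYPE('n) p * omega TYPE('n) * r powr (p + real CARD('n))) *
       (\<Sum>y \<in> grid h \<inter> ball 0 r. Jp p (\<phi> (x + y) - \<phi> x))"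

end

theory Submission
  imports Defs
begin


lemma lip_real:
  fixes f f' :: "real \<Rightarrow> real"
  assumes der: "\<And>t. min u v \<le> t \<Longrightarrow> t \<le> max u v \<Longrightarrow> (f has_real_derivative f' t) (at t)"
    and bnd: "\<And>t. min u v \<le> t \<Longrightarrow> t \<le> max u v \<Longrightarrow> \<bar>f' t\<bar> \<le> M"
  shows "\<bar>f u - f v\<bar> \<le> M * \<bar>u - v\<bar>"
proof (cases "u = v")
  case True then show ?thesis by simp
next
  case False
  show ?thesis
  proof (cases "u < v")
    case True
    obtain z where z: "u < z" "z < v" "f v - f u = (v - u) * f' z"
      using MVT2[of u v f f'] der True by (auto simp: min_def max_def)
    have "\<bar>f' z\<bar> \<le> M" using bnd[of z] z True by (auto simp: min_def max_def)
    have "\<bar>f u - f v\<bar> = \<bar>f v - f u\<bar>" by (rule abs_minus_commute)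
    also have "\<dots> = \<bar>(v - u) * f' z\<bar>" using z by simp
    also have "\<dots> = (v - u) * \<bar>f' z\<bar>" using True by (simp add: abs_mult)
    also have "\<dots> \<le> (v - u) * M" using \<open>\<bar>f' z\<bar> \<le> M\<close> True by (intro mult_left_mono) auto
    finally show ?thesis using True by (simp add: mult.commute)
  next
    case False
    with \<open>u \<noteq> v\<close> have vu: "v < u" by simp
    obtain z where z: "v < z" "z < u" "f u - f v = (u - v) * f' z"
      using MVT2[of v u f f'] der vu by (auto simp: min_def max_def)
    have "\<bar>f' z\<bar> \<le> M" using bnd[of z] z vu by (auto simp: min_def max_def)
    have "\<bar>f u - f v\<bar> = \<bar>(u - v) * f' z\<bar>" using z by simp
    also have "\<dots> = (u - v) * \<bar>f' z\<bar>" using vu by (simp add: abs_mult)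
    also have "\<dots> \<le> (u - v) * M" using \<open>\<bar>f' z\<bar> \<le> M\<close> vu by (intro mult_left_mono) auto
    finally show ?thesis using vu by (simp add: mult.commute)
  qed
qed

lemma powr_diff_bound:
  fixes u v b :: real
  assumes "0 \<le> u" "u \<le> v" "1 \<le> b"
  shows "v powr b - u powr b \<le> b * v powr (b - 1) * (v - u)"
proof (cases "u = 0")
  case True
  show ?thesis
  proof (cases "v = 0")
    case True then show ?thesis using \<open>u = 0\<close> by simp
  next
    case False
    then have v: "v > 0" using assms by simp
    have "v powr b = v powr ((b - 1) + 1)" by simp
    also have "\<dots> = v powr (b - 1) * v powr 1" by (rule powr_add)
    also have "\<dots> = v powr (b - 1) * v" using v by simp
    finally have "v powr b = v powr (b - 1) * v" .
    also have "\<dots> \<le> b * v powr (b - 1) * v" using v assms by (simp add: mult_right_mono)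
    finally show ?thesis using True by simp
  qed
next
  case False
  then have u: "u > 0" using assms by simp
  have "\<bar>v powr b - u powr b\<bar> \<le> (b * v powr (b - 1)) * \<bar>v - u\<bar>"
  proof (rule lip_real[where f' = "\<lambda>t. b * t powr (b - 1)"])
    fix t assume "min v u \<le> t" "t \<le> max v u"
    then have t: "u \<le> t" "t \<le> v" using assms by auto
    then show "((\<lambda>z. z powr b) has_real_derivative b * t powr (b - 1)) (at t)"
      using u by (intro has_real_derivative_powr) auto
    show "\<bar>b * t powr (b - 1)\<bar> \<le> b * v powr (b - 1)"
      using t u assms by (auto intro!: mult_left_mono powr_mono2)
  qed
  then show ?thesis using assms by simp
qed


lemma Jp_abs: "\<bar>Jp p t\<bar> = \<bar>t\<bar> powr (p - 1)"
proof (cases "t = 0")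
  case True then show ?thesis by (simp add: Jp_def)
next
  case False
  have "\<bar>Jp p t\<bar> = \<bar>t\<bar> * \<bar>t\<bar> powr (p - 2)" using False by (simp add: Jp_def abs_mult)
  also have "\<dots> = \<bar>t\<bar> powr (1 + (p - 2))" using False by (simp add: powr_mult_base)
  finally show ?thesis by simp
qed

lemma Jp_neg: "Jp p (- t) = - Jp p t"
  by (simp add: Jp_def)

lemma Jp_pos: "t > 0 \<Longrightarrow> Jp p t = t powr (p - 1)"
  using Jp_abs[of p t] by (simp add: Jp_def)

lemma two_powr_ge: "-1 \<le> a \<Longrightarrow> 2 powr a \<ge> (1/2::real)"
proof -
  assume "-1 \<le> a"
  then have "(2::real) powr (-1) \<le> 2 powr a" by (intro powr_mono) auto
  then show ?thesis by (simp add: powr_minus)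
qed

lemma Jp_pair_pos:
  fixes p E u v l :: real
  assumes p: "1 < p" "p < 2" and E: "E > 0" and l: "l \<ge> 2 * E"
    and u: "\<bar>u - l\<bar> \<le> E" and v: "\<bar>v - l\<bar> \<le> E"
  shows "\<bar>Jp p u - Jp p v\<bar> \<le> 4 * E * l powr (p - 2)"
proof -
  have u0: "u \<ge> l / 2" and v0: "v \<ge> l / 2" using u v l by auto
  have l0: "l > 0" using l E by simp
  have "\<bar>u powr (p - 1) - v powr (p - 1)\<bar> \<le> ((p - 1) * (l / 2) powr (p - 2)) * \<bar>u - v\<bar>"
  proof (rule lip_real[where f' = "\<lambda>t. (p - 1) * t powr (p - 1 - 1)"])
    fix t assume "min u v \<le> t" "t \<le> max u v"
    then have t: "t \<ge> l / 2" using u0 v0 by auto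
    then show "((\<lambda>z. z powr (p - 1)) has_real_derivative (p - 1) * t powr (p - 1 - 1)) (at t)"
      using l0 by (intro has_real_derivative_powr) auto
    have "t powr (p - 2) \<le> (l / 2) powr (p - 2)"
      using t l0 p by (intro powr_mono2') auto
    then show "\<bar>(p - 1) * t powr (p - 1 - 1)\<bar> \<le> (p - 1) * (l / 2) powr (p - 2)"
      using p t l0 by (simp add: abs_mult)
  qed
  also have "\<dots> \<le> (1 * (2 * l powr (p - 2))) * (2 * E)"
  proof (intro mult_mono)
    show "p - 1 \<le> 1" using p by simp
    have "(l / 2) powr (p - 2) = l powr (p - 2) / 2 powr (p - 2)"
      using l0 by (simp add: powr_divide)
    also have "\<dots> \<le> l powr (p - 2) / (1/2)"
      using two_powr_ge[of "p - 2"] p by (intro divide_left_mono) auto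
    finally show "(l / 2) powr (p - 2) \<le> 2 * l powr (p - 2)" by simp
    show "\<bar>u - v\<bar> \<le> 2 * E" using u v by simp
  qed (use p l0 in auto)
  finally have "\<bar>u powr (p - 1) - v powr (p - 1)\<bar> \<le> 4 * E * l powr (p - 2)" by (simp add: mult_ac)
  moreover have "Jp p u = u powr (p - 1)" "Jp p v = v powr (p - 1)"
    using u0 v0 l0 by (auto intro!: Jp_pos)
  ultimately show ?thesis by simp
qed

definition Pb :: "real \<Rightarrow> real \<Rightarrow> real \<Rightarrow> real" where
  "Pb p E t = (if \<bar>t\<bar> < 2 * E then 6 * E powr (p - 1) else 4 * E * \<bar>t\<bar> powr (p - 2))"

lemma Jp_pair:
  fixes p E u v l :: real
  assumes p: "1 < p" "p < 2" and E: "E > 0"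
    and u: "\<bar>u - l\<bar> \<le> E" and v: "\<bar>v - l\<bar> \<le> E"
  shows "\<bar>Jp p u - Jp p v\<bar> \<le> Pb p E l"
proof (cases "\<bar>l\<bar> < 2 * E")
  case True
  have "\<bar>Jp p w\<bar> \<le> 3 * E powr (p - 1)" if "\<bar>w\<bar> \<le> 3 * E" for w
  proof -
    have "\<bar>Jp p w\<bar> \<le> (3 * E) powr (p - 1)"
      unfolding Jp_abs using that p by (intro powr_mono2) auto
    also have "\<dots> = 3 powr (p - 1) * E powr (p - 1)" using E by (simp add: powr_mult)
    also have "\<dots> \<le> 3 powr 1 * E powr (p - 1)"
      using p by (intro mult_right_mono powr_mono) auto
    finally show ?thesis by simp
  qed
  then have "\<bar>Jp p u\<bar> \<le> 3 * E powr (p - 1)" "\<bar>Jp p v\<bar> \<le> 3 * E powr (p - 1)"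
    using u v True by auto
  then show ?thesis using True by (simp add: Pb_def)
next
  case False
  show ?thesis
  proof (cases "l > 0")
    case True
    then show ?thesis using Jp_pair_pos[OF p E _ u v] False by (simp add: Pb_def)
  next
    case lneg: False
    have "\<bar>Jp p (-u) - Jp p (-v)\<bar> \<le> 4 * E * (-l) powr (p - 2)"
      using Jp_pair_pos[OF p E, of "-l" "-u" "-v"] False lneg u v by auto
    then show ?thesis using False lneg by (simp add: Pb_def Jp_neg)
  qed
qed

lemma Pb_nonneg: "E > 0 \<Longrightarrow> 0 \<le> Pb p E t"
  by (simp add: Pb_def)

lemma Pb_le_A:
  assumes p: "1 < p" "p < 2" and E: "E > 0"
  shows "Pb p E t \<le> 6 * E powr (p - 1)"
proof (cases "\<bar>t\<bar> < 2 * E")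
  case True then show ?thesis by (simp add: Pb_def)
next
  case False
  have "\<bar>t\<bar> powr (p - 2) \<le> (2 * E) powr (p - 2)"
    using False p E by (intro powr_mono2') auto
  also have "\<dots> = 2 powr (p - 2) * E powr (p - 2)" using E by (simp add: powr_mult)
  also have "\<dots> \<le> 2 powr 0 * E powr (p - 2)" using p by (intro mult_right_mono powr_mono) auto
  finally have "\<bar>t\<bar> powr (p - 2) \<le> E powr (p - 2)" by simp
  then have "E * \<bar>t\<bar> powr (p - 2) \<le> E * E powr (p - 2)" using E by simp
  moreover have "E * E powr (p - 2) = E powr (p - 1)"
    using E by (simp add: powr_mult_base)
  ultimately have "E * \<bar>t\<bar> powr (p - 2) \<le> E powr (p - 1)" by simp
  moreover have "Pb p E t = 4 * (E * \<bar>t\<bar> powr (p - 2))" using False by (simp add: Pb_def)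
  ultimately show ?thesis using powr_ge_zero[of E "p - 1"] by linarith
qed

lemma Pb_le_B:
  assumes p: "1 < p" "p < 2" and E: "E > 0" and t: "t \<noteq> 0"
  shows "Pb p E t \<le> 12 * E * \<bar>t\<bar> powr (p - 2)"
proof (cases "\<bar>t\<bar> < 2 * E")
  case True
  have "(2 * E) powr (p - 2) \<le> \<bar>t\<bar> powr (p - 2)"
    using True p t by (intro powr_mono2') auto
  moreover have "(2 * E) powr (p - 2) = 2 powr (p - 2) * E powr (p - 2)" using E by (simp add: powr_mult)
  moreover have "2 powr (p - 2) \<ge> 1/2" using two_powr_ge[of "p - 2"] p by simp
  moreover have "(1/2) * E powr (p - 2) \<le> 2 powr (p - 2) * E powr (p - 2)"
    using \<open>2 powr (p - 2) \<ge> 1/2\<close> by (intro mult_right_mono) auto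
  ultimately have "E powr (p - 2) \<le> 2 * \<bar>t\<bar> powr (p - 2)"
    by linarith
  then have "E * E powr (p - 2) \<le> E * (2 * \<bar>t\<bar> powr (p - 2))" using E by simp
  moreover have "E * E powr (p - 2) = E powr (p - 1)"
    using E by (simp add: powr_mult_base)
  ultimately show ?thesis using True by (simp add: Pb_def)
next
  case False then show ?thesis using E by (simp add: Pb_def)
qed


definition Sq :: "real \<Rightarrow> nat \<Rightarrow> real" where
  "Sq q n = (\<Sum>i<n. real (Suc i) powr q)"

lemma Sq_mono: "n \<le> n' \<Longrightarrow> Sq q n \<le> Sq q n'"
  unfolding Sq_def by (intro sum_mono2) auto

lemma Sq_bound:
  assumes p: "1 < p" "p < 2"
  shows "Sq (p - 2) n \<le> real n powr (p - 1) / (p - 1)"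
proof -
  have step: "(p - 1) * real (Suc i) powr (p - 2) \<le> real (Suc i) powr (p - 1) - real i powr (p - 1)" for i
  proof (cases "i = 0")
    case True then show ?thesis using p by simp
  next
    case False
    have der: "\<And>t. real i \<le> t \<Longrightarrow> t \<le> real (Suc i) \<Longrightarrow> ((\<lambda>t. t powr (p - 1)) has_real_derivative (p - 1) * t powr (p - 1 - 1)) (at t)"
      using False by (intro has_real_derivative_powr) auto
    have "\<exists>z. real i < z \<and> z < real (Suc i) \<and> real (Suc i) powr (p - 1) - real i powr (p - 1) = (real (Suc i) - real i) * ((p - 1) * z powr (p - 1 - 1))"
      by (rule MVT2) (use der in auto)
    then obtain z where z: "real i < z" "z < real (Suc i)"
      "real (Suc i) powr (p - 1) - real i powr (p - 1) = (real (Suc i) - real i) * ((p - 1) * z powr (p - 1 - 1))"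
      by blast
    have "real (Suc i) powr (p - 2) \<le> z powr (p - 2)"
      using z p False by (intro powr_mono2') auto
    then show ?thesis using z p by simp
  qed
  have "(p - 1) * Sq (p - 2) n = (\<Sum>i<n. (p - 1) * real (Suc i) powr (p - 2))"
    by (simp add: Sq_def sum_distrib_left)
  also have "\<dots> \<le> (\<Sum>i<n. real (Suc i) powr (p - 1) - real i powr (p - 1))"
    by (intro sum_mono step)
  also have "\<dots> = real n powr (p - 1)"
    using sum_lessThan_telescope[of "\<lambda>i. real i powr (p - 1)" n] by simp
  finally show ?thesis using p by (simp add: field_simps)
qed

lemma card_sum_bound:
  fixes q :: real
  assumes q: "q \<le> 0"
  shows "finite T \<Longrightarrow> 0 \<notin> T \<Longrightarrow> (\<Sum>j\<in>T. real j powr q) \<le> Sq q (card T)"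
proof (induction "card T" arbitrary: T)
  case 0 then show ?case by (simp add: Sq_def)
next
  case (Suc n)
  then have ne: "T \<noteq> {}" by auto
  define M where "M = Max T"
  have MT: "M \<in> T" using Suc.prems ne by (simp add: M_def)
  have "T \<subseteq> {1..M}" using Suc.prems by (auto simp: M_def) (metis Suc.prems(2) Suc_leI neq0_conv)
  then have "card T \<le> M" using card_mono[of "{1..M}" T] by simp
  have cn: "n = card (T - {M})" using Suc.hyps(2) MT Suc.prems by simp
  have ih: "(\<Sum>j\<in>T - {M}. real j powr q) \<le> Sq q n"
  proof -
    have "(\<Sum>j\<in>T - {M}. real j powr q) \<le> Sq q (card (T - {M}))"
      using Suc.hyps(1)[OF cn] Suc.prems by auto
    then show ?thesis using cn by simp
  qed
  have "real M powr q \<le> real (Suc n) powr q"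
    using \<open>card T \<le> M\<close> Suc.hyps(2) q by (intro powr_mono2') auto
  have "(\<Sum>j\<in>T. real j powr q) = (\<Sum>j\<in>T - {M}. real j powr q) + real M powr q"
    using Suc.prems MT by (simp add: sum.remove)
  also have "\<dots> \<le> Sq q n + real (Suc n) powr q" using ih \<open>real M powr q \<le> _\<close> by simp
  also have "\<dots> = Sq q (card T)" using Suc.hyps(2)[symmetric] by (simp add: Sq_def)
  finally show ?case .
qed

lemma sum1d:
  fixes f :: "real \<Rightarrow> real" and c \<sigma> A B :: real and N :: nat
  assumes p: "1 < p" "p < 2" and \<sigma>: "\<sigma> \<noteq> 0" and B: "B \<ge> 0"
    and f0: "\<And>t. 0 \<le> f t" and fA: "\<And>t. f t \<le> A"
    and fB: "\<And>t. t \<noteq> 0 \<Longrightarrow> f t \<le> B * \<bar>t\<bar> powr (p - 2)"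
  shows "(\<Sum>m\<in>{- int N..int N}. f (c + \<sigma> * of_int m))
          \<le> A + 2 * (B * (\<bar>\<sigma>\<bar> / 2) powr (p - 2)) * Sq (p - 2) (2 * N + 1)"
proof -
  define I where "I = {- int N..int N}"
  define w where "w = c / \<sigma>"
  define k0 where "k0 = round (- w)"
  define B' where "B' = B * (\<bar>\<sigma>\<bar> / 2) powr (p - 2)"
  have B': "B' \<ge> 0" using B by (simp add: B'_def)
  have k0: "\<bar>of_int k0 + w\<bar> \<le> 1/2" using of_int_round_abs_le[of "-w"] by (simp add: k0_def)
  define h1 where "h1 m = (if k0 < m then real (nat (m - k0)) powr (p - 2) else 0)" for m
  define h2 where "h2 m = (if m < k0 then real (nat (k0 - m)) powr (p - 2) else 0)" for m
  have pt: "f (c + \<sigma> * of_int m) \<le> (if m = k0 then A else 0) + B' * h1 m + B' * h2 m" for m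
  proof (cases "m = k0")
    case True
    then show ?thesis using fA by (simp add: h1_def h2_def)
  next
    case False
    have cm: "c + \<sigma> * of_int m = \<sigma> * (w + of_int m)" using \<sigma> by (simp add: w_def field_simps)
    have d1: "\<bar>of_int m - of_int k0\<bar> \<ge> (1::real)" using False by (simp del: of_int_diff add: of_int_diff[symmetric])
    have "\<bar>of_int m - of_int k0\<bar> = \<bar>(w + of_int m) - (of_int k0 + w)\<bar>" by simp
    also have "\<dots> \<le> \<bar>w + of_int m\<bar> + \<bar>of_int k0 + w\<bar>" by (rule abs_triangle_ineq4)
    finally have "\<bar>of_int m - of_int k0\<bar> \<le> \<bar>w + of_int m\<bar> + \<bar>of_int k0 + w\<bar>" .
    then have lb: "\<bar>w + of_int m\<bar> \<ge> \<bar>of_int m - of_int k0\<bar> / 2" using k0 d1 by argo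
    then have nz: "w + of_int m \<noteq> 0" using d1 by auto
    have "f (c + \<sigma> * of_int m) \<le> B * \<bar>\<sigma> * (w + of_int m)\<bar> powr (p - 2)"
      using fB[of "\<sigma> * (w + of_int m)"] nz \<sigma> cm by simp
    also have "\<bar>\<sigma> * (w + of_int m)\<bar> powr (p - 2) \<le> (\<bar>\<sigma>\<bar> * (\<bar>of_int m - of_int k0\<bar> / 2)) powr (p - 2)"
      using lb d1 \<sigma> p by (intro powr_mono2') (auto simp: abs_mult intro!: mult_left_mono)
    also have "\<dots> = (\<bar>\<sigma>\<bar> / 2) powr (p - 2) * \<bar>of_int m - of_int k0\<bar> powr (p - 2)"
      by (simp add: powr_mult[symmetric])
    finally have "f (c + \<sigma> * of_int m) \<le> B' * \<bar>of_int m - of_int k0\<bar> powr (p - 2)"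
      using B by (simp add: B'_def mult_left_mono mult.assoc)
    moreover have "\<bar>of_int m - of_int k0\<bar> powr (p - 2) = h1 m + h2 m"
      using False by (auto simp: h1_def h2_def)
    ultimately show ?thesis using False by (simp add: distrib_left)
  qed
  have fin: "finite I" by (simp add: I_def)
  have cardI: "card I = 2 * N + 1" by (simp add: I_def) 
  have S1: "(\<Sum>m\<in>I. h1 m) \<le> Sq (p - 2) (2 * N + 1)"
  proof -
    have "(\<Sum>m\<in>I. h1 m) = (\<Sum>m\<in>{m\<in>I. k0 < m}. real (nat (m - k0)) powr (p - 2))"
      unfolding h1_def by (rule sum.inter_filter[OF fin, symmetric])
    also have "\<dots> = (\<Sum>j\<in>(\<lambda>m. nat (m - k0)) ` {m\<in>I. k0 < m}. real j powr (p - 2))"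
      by (subst sum.reindex) (auto simp: inj_on_def)
    also have "\<dots> \<le> Sq (p - 2) (card ((\<lambda>m. nat (m - k0)) ` {m\<in>I. k0 < m}))"
      using fin p by (intro card_sum_bound) auto
    also have "\<dots> \<le> Sq (p - 2) (2 * N + 1)"
    proof (intro Sq_mono)
      have "card ((\<lambda>m. nat (m - k0)) ` {m\<in>I. k0 < m}) \<le> card {m\<in>I. k0 < m}"
        using fin by (intro card_image_le) auto
      also have "\<dots> \<le> card I" using fin by (intro card_mono) auto
      finally show "card ((\<lambda>m. nat (m - k0)) ` {m\<in>I. k0 < m}) \<le> 2 * N + 1" using cardI by simp
    qed
    finally show ?thesis .
  qed
  have S2: "(\<Sum>m\<in>I. h2 m) \<le> Sq (p - 2) (2 * N + 1)"
  proof -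
    have "(\<Sum>m\<in>I. h2 m) = (\<Sum>m\<in>{m\<in>I. m < k0}. real (nat (k0 - m)) powr (p - 2))"
      unfolding h2_def by (rule sum.inter_filter[OF fin, symmetric])
    also have "\<dots> = (\<Sum>j\<in>(\<lambda>m. nat (k0 - m)) ` {m\<in>I. m < k0}. real j powr (p - 2))"
      by (subst sum.reindex) (auto simp: inj_on_def)
    also have "\<dots> \<le> Sq (p - 2) (card ((\<lambda>m. nat (k0 - m)) ` {m\<in>I. m < k0}))"
      using fin p by (intro card_sum_bound) auto
    also have "\<dots> \<le> Sq (p - 2) (2 * N + 1)"
    proof (intro Sq_mono)
      have "card ((\<lambda>m. nat (k0 - m)) ` {m\<in>I. m < k0}) \<le> card {m\<in>I. m < k0}"
        using fin by (intro card_image_le) auto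
      also have "\<dots> \<le> card I" using fin by (intro card_mono) auto
      finally show "card ((\<lambda>m. nat (k0 - m)) ` {m\<in>I. m < k0}) \<le> 2 * N + 1" using cardI by simp
    qed
    finally show ?thesis .
  qed
  have S0: "(\<Sum>m\<in>I. (if m = k0 then A else 0)) \<le> A"
  proof -
    have "(\<Sum>m\<in>I. (if m = k0 then A else 0)) = (if k0 \<in> I then A else 0)"
      using fin by (simp add: sum.delta)
    also have "\<dots> \<le> A" using fA[of 0] f0[of 0] by simp
    finally show ?thesis .
  qed
  have "(\<Sum>m\<in>I. f (c + \<sigma> * of_int m)) \<le> (\<Sum>m\<in>I. (if m = k0 then A else 0) + B' * h1 m + B' * h2 m)"
    by (intro sum_mono pt)
  also have "\<dots> = (\<Sum>m\<in>I. (if m = k0 then A else 0)) + B' * (\<Sum>m\<in>I. h1 m) + B' * (\<Sum>m\<in>I. h2 m)"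
    by (simp add: sum.distrib sum_distrib_left)
  also have "\<dots> \<le> A + B' * Sq (p - 2) (2 * N + 1) + B' * Sq (p - 2) (2 * N + 1)"
    using S0 S1 S2 B' by (intro add_mono mult_left_mono) auto
  finally show ?thesis by (simp add: I_def B'_def mult_ac)
qed


definition Box :: "nat \<Rightarrow> ('n::finite \<Rightarrow> int) set" where
  "Box N = {k. \<forall>j. \<bar>k j\<bar> \<le> int N}"

definition emb :: "real \<Rightarrow> ('n::finite \<Rightarrow> int) \<Rightarrow> real^'n" where
  "emb h k = (\<chi> j. h * of_int (k j))"

definition kap :: "real \<Rightarrow> real^'n::finite \<Rightarrow> ('n \<Rightarrow> int)" where
  "kap h y = (\<lambda>j. \<lfloor>y $ j / h\<rfloor>)"

lemma abs_le_intN: "\<bar>a\<bar> \<le> int N \<longleftrightarrow> (- int N \<le> a \<and> a \<le> int N)" for a :: int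
  by auto

lemma Box_PiE: "Box N = PiE UNIV (\<lambda>_. {- int N..int N})"
  unfolding Box_def PiE_UNIV_domain Pi_def by (auto simp: abs_le_intN)

lemma finite_Box: "finite (Box N)"
  unfolding Box_PiE by (intro finite_PiE) auto

lemma card_Box: "card (Box N :: ('n::finite \<Rightarrow> int) set) = (2 * N + 1) ^ CARD('n)"
proof -
  have "nat (2 * int N + 1) = 2 * N + 1" by arith
  then show ?thesis unfolding Box_PiE by (simp add: card_PiE)
qed

lemma grid_kap:
  assumes h: "h > 0" and y: "y \<in> grid h \<inter> ball 0 r"
  shows "emb h (kap h y) = y" "kap h y \<in> Box (nat \<lfloor>r / h\<rfloor>)"
proof -
  have yk: "\<forall>j. \<exists>k::int. y $ j = h * of_int k" using y by (simp add: grid_def)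
  have fl: "h * of_int \<lfloor>y $ j / h\<rfloor> = y $ j" for j
  proof -
    obtain k :: int where "y $ j = h * of_int k" using yk by blast
    then show ?thesis using h by simp
  qed
  show "emb h (kap h y) = y" by (simp add: emb_def kap_def fl vec_eq_iff)
  have "\<bar>kap h y j\<bar> \<le> int (nat \<lfloor>r / h\<rfloor>)" for j
  proof -
    have "\<bar>y $ j\<bar> < r" using y component_le_norm_cart[of y j] by auto
    then have "\<bar>h * of_int (kap h y j)\<bar> < r" using fl[of j] by (simp add: kap_def)
    then have "h * \<bar>of_int (kap h y j)\<bar> < r" using h by (simp add: abs_mult)
    then have "\<bar>of_int (kap h y j)\<bar> < r / h" using h by (simp add: field_simps)
    then have kf: "\<bar>kap h y j\<bar> \<le> \<lfloor>r / h\<rfloor>" by (simp add: le_floor_iff)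
    then have "0 \<le> \<lfloor>r / h\<rfloor>" using abs_ge_zero order_trans by blast
    then show ?thesis using kf by simp
  qed
  then show "kap h y \<in> Box (nat \<lfloor>r / h\<rfloor>)" by (simp add: Box_def)
qed

lemma inj_kap: "h > 0 \<Longrightarrow> inj_on (kap h) (grid h \<inter> ball (0::real^'n::finite) r)"
  by (metis grid_kap(1) inj_on_inverseI)

lemma finite_S: "h > 0 \<Longrightarrow> finite (grid h \<inter> ball (0::real^'n::finite) r)"
proof -
  assume h: "h > 0"
  have "kap h ` (grid h \<inter> ball (0::real^'n) r) \<subseteq> Box (nat \<lfloor>r / h\<rfloor>)"
    by (intro image_subsetI grid_kap(2)[OF h])
  then have "finite (kap h ` (grid h \<inter> ball (0::real^'n) r))"
    using finite_Box finite_subset by blast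
  then show ?thesis using finite_imageD inj_kap[OF h] by blast
qed

lemma card_S: "h > 0 \<Longrightarrow> card (grid h \<inter> ball (0::real^'n::finite) r) \<le> (2 * nat \<lfloor>r / h\<rfloor> + 1) ^ CARD('n)"
proof -
  assume h: "h > 0"
  have "card (grid h \<inter> ball (0::real^'n) r) = card (kap h ` (grid h \<inter> ball (0::real^'n) r))"
    by (rule card_image[OF inj_kap[OF h, of r], symmetric])
  also have "\<dots> \<le> card (Box (nat \<lfloor>r / h\<rfloor>) :: ('n \<Rightarrow> int) set)"
    by (intro card_mono finite_Box image_subsetI grid_kap(2)[OF h])
  finally show ?thesis by (simp add: card_Box)
qed

lemma sum_S_Box:
  fixes G :: "real^'n::finite \<Rightarrow> real"
  assumes h: "h > 0" and G: "\<And>y. 0 \<le> G y"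
  shows "(\<Sum>y\<in>grid h \<inter> ball 0 r. G y) \<le> (\<Sum>k\<in>Box (nat \<lfloor>r / h\<rfloor>). G (emb h k))"
proof -
  let ?S = "grid h \<inter> ball (0::real^'n) r"
  have "(\<Sum>y\<in>?S. G y) = (\<Sum>y\<in>?S. G (emb h (kap h y)))"
  proof (rule sum.cong[OF refl])
    fix y assume "y \<in> ?S"
    then show "G y = G (emb h (kap h y))" using grid_kap(1)[OF h, of y r] by simp
  qed
  also have "\<dots> = (\<Sum>k\<in>kap h ` ?S. G (emb h k))"
    using sum.reindex[OF inj_kap[OF h, of r], of "\<lambda>k. G (emb h k)"] by simp
  also have "\<dots> \<le> (\<Sum>k\<in>Box (nat \<lfloor>r / h\<rfloor>). G (emb h k))"
    using G by (intro sum_mono2 finite_Box image_subsetI grid_kap(2)[OF h]) auto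
  finally show ?thesis .
qed

lemma sum_Box_split:
  fixes F :: "('n::finite \<Rightarrow> int) \<Rightarrow> real" and i :: 'n
  shows "(\<Sum>k\<in>Box N. F k) = (\<Sum>k'\<in>{k\<in>Box N. k i = 0}. \<Sum>m\<in>{- int N..int N}. F (k'(i := m)))"
proof -
  have bij: "bij_betw (\<lambda>(k', m). k'(i := m)) ({k\<in>Box N. k i = 0} \<times> {- int N..int N}) (Box N)"
    by (rule bij_betw_byWitness[where f' = "\<lambda>k. (k(i := 0), k i)"]) (auto simp: Box_def abs_le_intN)
  have "(\<Sum>k\<in>Box N. F k) = (\<Sum>km\<in>{k\<in>Box N. k i = 0} \<times> {- int N..int N}. F ((\<lambda>(k', m). k'(i := m)) km))"
    using sum.reindex_bij_betw[OF bij, of F] by simp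
  also have "\<dots> = (\<Sum>(k', m)\<in>{k\<in>Box N. k i = 0} \<times> {- int N..int N}. F (k'(i := m)))"
    by (intro sum.cong) auto
  also have "\<dots> = (\<Sum>k'\<in>{k\<in>Box N. k i = 0}. \<Sum>m\<in>{- int N..int N}. F (k'(i := m)))"
    by (rule sum.cartesian_product[symmetric])
  finally show ?thesis .
qed

lemma card_Box':
  fixes i :: "'n::finite"
  shows "card {k\<in>Box N. k i = 0} = (2 * N + 1) ^ (CARD('n) - 1)"
proof -
  have "{k\<in>Box N. k i = 0} = PiE (UNIV::'n set) (\<lambda>j. if j = i then {0} else {- int N..int N})"
  proof (rule set_eqI)
    fix k :: "'n \<Rightarrow> int"
    have "k \<in> {k\<in>Box N. k i = 0} \<longleftrightarrow> (\<forall>j. k j \<in> (if j = i then {0} else {- int N..int N}))"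
    proof
      assume k: "k \<in> {k\<in>Box N. k i = 0}"
      show "\<forall>j. k j \<in> (if j = i then {0} else {- int N..int N})"
      proof
        fix j
        have "\<bar>k j\<bar> \<le> int N" using k by (simp add: Box_def)
        then show "k j \<in> (if j = i then {0} else {- int N..int N})" using k by (simp add: abs_le_intN)
      qed
    next
      assume k: "\<forall>j. k j \<in> (if j = i then {0} else {- int N..int N})"
      have "\<bar>k j\<bar> \<le> int N" for j
        using k[rule_format, of j] by (cases "j = i") (auto simp: abs_le_intN)
      moreover have "k i = 0" using k[rule_format, of i] by simp
      ultimately show "k \<in> {k\<in>Box N. k i = 0}" by (simp add: Box_def)
    qed
    then show "k \<in> {k\<in>Box N. k i = 0} \<longleftrightarrow> k \<in> PiE (UNIV::'n set) (\<lambda>j. if j = i then {0} else {- int N..int N})"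
      by (simp add: PiE_UNIV_domain Pi_iff)
  qed
  then have "card {k\<in>Box N. k i = 0} = (\<Prod>j\<in>(UNIV::'n set). card (if j = i then {0::int} else {- int N..int N}))"
    by (simp add: card_PiE)
  also have "\<dots> = (\<Prod>j\<in>(UNIV::'n set). if j = i then 1 else 2 * N + 1)"
    by (intro prod.cong) auto
  also have "\<dots> = (2 * N + 1) ^ (CARD('n) - 1)"
    by (simp add: prod.If_cases Diff_eq[symmetric] card_Diff_singleton)
  finally show ?thesis .
qed


lemma powr_range_bound:
  fixes s t e :: real
  assumes s: "s > 0" and t: "s^2 / 4 \<le> t" "t \<le> 9 * s^2 / 4"
  shows "t powr e \<le> ((1/4) powr e + (9/4) powr e) * s powr (2 * e)"
proof -
  define \<tau> where "\<tau> = t / s^2"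
  have s2: "s^2 > 0" using s by simp
  have \<tau>: "1/4 \<le> \<tau>" "\<tau> \<le> 9/4" using t s2 by (auto simp: \<tau>_def field_simps)
  have tt: "t = s^2 * \<tau>" using s2 by (simp add: \<tau>_def)
  have "t powr e = (s^2) powr e * \<tau> powr e" using s2 \<tau> by (simp add: tt powr_mult)
  also have "(s^2) powr e = s powr (2 * e)"
    using s by (simp add: powr_powr[symmetric])
  also have "\<tau> powr e \<le> (1/4) powr e + (9/4) powr e"
  proof (cases "e \<ge> 0")
    case True
    then have "\<tau> powr e \<le> (9/4) powr e" using \<tau> by (intro powr_mono2) auto
    then show ?thesis by (smt (verit) powr_ge_zero)
  next
    case False
    then have "\<tau> powr e \<le> (1/4) powr e" using \<tau> by (intro powr_mono2') auto
    then show ?thesis by (smt (verit) powr_ge_zero)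
  qed
  finally show ?thesis using s by (simp add: mult.commute mult_left_mono)
qed

lemma taylor1d:
  fixes s u1 b :: real
  assumes s: "s > 0" and b: "b > 1" and u1: "s^2 / 4 \<le> u1" "u1 \<le> 9 * s^2 / 4"
  defines "M2 \<equiv> b * (b - 1) * ((1/4) powr (b - 2) + (9/4) powr (b - 2)) * s powr (2 * (b - 2))"
  shows "\<bar>u1 powr b - (s^2) powr b - b * (s^2) powr (b - 1) * (u1 - s^2)\<bar> \<le> M2 * (u1 - s^2)^2"
proof -
  define u0 where "u0 = s^2"
  have u0: "s^2 / 4 \<le> u0" "u0 \<le> 9 * s^2 / 4" using s by (auto simp: u0_def)
  have s2: "s^2 > 0" using s by simp
  have inr: "s^2 / 4 \<le> t" "t \<le> 9 * s^2 / 4" if "min a c \<le> t" "t \<le> max a c"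
      "s^2 / 4 \<le> a" "a \<le> 9 * s^2 / 4" "s^2 / 4 \<le> c" "c \<le> 9 * s^2 / 4" for t a c
    using that by (auto simp: min_def max_def split: if_splits)
  have pos: "t > 0" if "s^2 / 4 \<le> t" for t using that s2 by linarith
  have d2: "\<bar>b * (t powr (b - 1)) - b * (u0 powr (b - 1))\<bar> \<le> M2 * \<bar>t - u0\<bar>"
    if t: "s^2 / 4 \<le> t" "t \<le> 9 * s^2 / 4" for t
  proof (rule lip_real[where f' = "\<lambda>z. b * ((b - 1) * z powr (b - 1 - 1))"])
    fix z assume z: "min t u0 \<le> z" "z \<le> max t u0"
    have zr: "s^2 / 4 \<le> z" "z \<le> 9 * s^2 / 4" using inr[OF z t u0] by auto
    show "((\<lambda>z. b * z powr (b - 1)) has_real_derivative b * ((b - 1) * z powr (b - 1 - 1))) (at z)"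
      using pos[OF zr(1)] by (auto intro!: derivative_eq_intros)
    have "z powr (b - 2) \<le> ((1/4) powr (b - 2) + (9/4) powr (b - 2)) * s powr (2 * (b - 2))"
      by (rule powr_range_bound[OF s zr])
    then have "b * (b - 1) * z powr (b - 2) \<le> b * (b - 1) * (((1/4) powr (b - 2) + (9/4) powr (b - 2)) * s powr (2 * (b - 2)))"
      using b by (intro mult_left_mono) auto
    then show "\<bar>b * ((b - 1) * z powr (b - 1 - 1))\<bar> \<le> M2"
      using b by (simp add: M2_def abs_mult mult_ac)
  qed
  have "\<bar>(u1 powr b - b * u0 powr (b - 1) * u1) - (u0 powr b - b * u0 powr (b - 1) * u0)\<bar> \<le> (M2 * \<bar>u1 - u0\<bar>) * \<bar>u1 - u0\<bar>"
  proof (rule lip_real[where f' = "\<lambda>z. b * z powr (b - 1) - b * u0 powr (b - 1)"])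
    fix z assume z: "min u1 u0 \<le> z" "z \<le> max u1 u0"
    have zr: "s^2 / 4 \<le> z" "z \<le> 9 * s^2 / 4" using inr[OF z u1 u0] by auto
    show "((\<lambda>z. z powr b - b * u0 powr (b - 1) * z) has_real_derivative b * z powr (b - 1) - b * u0 powr (b - 1)) (at z)"
      using pos[OF zr(1)] by (auto intro!: derivative_eq_intros)
    have "\<bar>z - u0\<bar> \<le> \<bar>u1 - u0\<bar>" using z by (auto simp: min_def max_def split: if_splits)
    moreover have "M2 \<ge> 0" using b by (simp add: M2_def)
    ultimately have "M2 * \<bar>z - u0\<bar> \<le> M2 * \<bar>u1 - u0\<bar>" by (intro mult_left_mono)
    then show "\<bar>b * z powr (b - 1) - b * u0 powr (b - 1)\<bar> \<le> M2 * \<bar>u1 - u0\<bar>"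
      using d2[OF zr] by simp
  qed
  moreover have "(u1 powr b - b * u0 powr (b - 1) * u1) - (u0 powr b - b * u0 powr (b - 1) * u0)
      = u1 powr b - u0 powr b - b * u0 powr (b - 1) * (u1 - u0)" by (simp add: algebra_simps)
  moreover have "(M2 * \<bar>u1 - u0\<bar>) * \<bar>u1 - u0\<bar> = M2 * (u1 - u0)^2"
    by (simp add: power2_eq_square abs_mult_self_eq)
  ultimately show ?thesis unfolding u0_def[symmetric] by simp
qed


definition Kb :: "real \<Rightarrow> real" where
  "Kb \<beta> = 9 * ((\<beta>/2) * (\<beta>/2 - 1) * ((1/4) powr (\<beta>/2 - 2) + (9/4) powr (\<beta>/2 - 2))) + \<beta>/2"

lemma sq_powr: "s > 0 \<Longrightarrow> (s^2) powr b = s powr (2 * b)" for s b :: real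
  by (simp add: powr_powr[symmetric])

lemma taylor_vec:
  fixes x y :: "'a::real_inner" and \<beta> :: real
  assumes \<beta>: "\<beta> > 2" and s: "norm x > 0" and y: "norm y \<le> norm x / 2"
  shows "\<bar>norm (x + y) powr \<beta> - norm x powr \<beta> - \<beta> * norm x powr (\<beta> - 2) * inner x y\<bar>
           \<le> Kb \<beta> * norm x powr (\<beta> - 2) * (norm y)^2"
proof -
  define s where "s = norm x"
  define b where "b = \<beta> / 2"
  define u1 where "u1 = (norm (x + y))^2"
  define c where "c = (1/4) powr (b - 2) + (9/4) powr (b - 2)"
  have s0: "s > 0" using s by (simp add: s_def)
  have b1: "b > 1" using \<beta> by (simp add: b_def)
  have n1: "norm (x + y) \<ge> s / 2" using norm_triangle_ineq2[of x "-y"] y by (simp add: s_def)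
  have n2: "norm (x + y) \<le> 3 * s / 2" using norm_triangle_ineq[of x y] y by (simp add: s_def)
  have u1r: "s^2 / 4 \<le> u1" "u1 \<le> 9 * s^2 / 4"
  proof -
    have "(s/2)^2 \<le> u1" unfolding u1_def using n1 s0 by (intro power_mono) auto
    then show "s^2 / 4 \<le> u1" by (simp add: power_divide)
    have "u1 \<le> (3 * s / 2)^2" unfolding u1_def using n2 by (intro power_mono) auto
    then show "u1 \<le> 9 * s^2 / 4" by (simp add: power_divide power_mult_distrib)
  qed
  have nxy: "norm (x + y) > 0" using n1 s0 by linarith
  have e1: "norm (x + y) powr \<beta> = u1 powr b" using nxy by (simp add: u1_def sq_powr b_def)
  have e2: "norm x powr \<beta> = (s^2) powr b" using s0 by (simp add: sq_powr b_def s_def)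
  have e3: "norm x powr (\<beta> - 2) = (s^2) powr (b - 1)" using s0 by (simp add: sq_powr b_def s_def algebra_simps)
  have u1e: "u1 - s^2 = 2 * inner x y + (norm y)^2"
    by (simp add: u1_def s_def power2_norm_eq_inner inner_add algebra_simps inner_commute)
  have T: "\<bar>u1 powr b - (s^2) powr b - b * (s^2) powr (b - 1) * (u1 - s^2)\<bar>
      \<le> (b * (b - 1) * c * s powr (2 * (b - 2))) * (u1 - s^2)^2"
    using taylor1d[OF s0 b1 u1r] by (simp add: c_def mult_ac)
  have "\<bar>u1 - s^2\<bar> \<le> 3 * s * norm y"
  proof -
    have "\<bar>inner x y\<bar> \<le> s * norm y" using Cauchy_Schwarz_ineq2[of x y] by (simp add: s_def)
    moreover have "(norm y)^2 \<le> s * norm y"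
    proof -
      have "norm y \<le> s" using y s0 norm_ge_zero[of y] unfolding s_def by linarith
      then have "norm y * norm y \<le> s * norm y" by (intro mult_right_mono) auto
      then show ?thesis by (simp add: power2_eq_square)
    qed
    moreover have "\<bar>2 * inner x y + (norm y)^2\<bar> \<le> \<bar>2 * inner x y\<bar> + \<bar>(norm y)^2\<bar>" by (rule abs_triangle_ineq)
    moreover have "\<bar>2 * inner x y\<bar> = 2 * \<bar>inner x y\<bar>" by simp
    moreover have "\<bar>(norm y)^2\<bar> = (norm y)^2" by simp
    ultimately show ?thesis unfolding u1e by argo
  qed
  then have u1sq: "(u1 - s^2)^2 \<le> 9 * s^2 * (norm y)^2"
  proof -
    assume h: "\<bar>u1 - s^2\<bar> \<le> 3 * s * norm y"
    have "(u1 - s^2)^2 = \<bar>u1 - s^2\<bar>^2" by simp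
    also have "\<dots> \<le> (3 * s * norm y)^2" using h by (intro power_mono) auto
    finally show ?thesis by (simp add: power_mult_distrib)
  qed
  have M0: "b * (b - 1) * c * s powr (2 * (b - 2)) \<ge> 0" using b1 by (simp add: c_def)
  have "(b * (b - 1) * c * s powr (2 * (b - 2))) * (u1 - s^2)^2
      \<le> (b * (b - 1) * c * s powr (2 * (b - 2))) * (9 * s^2 * (norm y)^2)"
    using u1sq M0 by (intro mult_left_mono) auto
  also have "\<dots> = 9 * (b * (b - 1) * c) * (s powr (2 * (b - 2)) * s^2) * (norm y)^2" by (simp add: mult_ac)
  also have "s powr (2 * (b - 2)) * s^2 = s powr (\<beta> - 2)"
  proof -
    have "s powr (2 * (b - 2)) * s^2 = s powr (2 * (b - 2)) * s powr 2" using s0 by simp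
    also have "\<dots> = s powr (2 * (b - 2) + 2)" by (rule powr_add[symmetric])
    finally show ?thesis by (simp add: b_def algebra_simps)
  qed
  finally have T2: "\<bar>u1 powr b - (s^2) powr b - b * (s^2) powr (b - 1) * (u1 - s^2)\<bar>
      \<le> 9 * (b * (b - 1) * c) * s powr (\<beta> - 2) * (norm y)^2" using T by linarith
  have lin: "b * (s^2) powr (b - 1) * (u1 - s^2) = \<beta> * norm x powr (\<beta> - 2) * inner x y + b * norm x powr (\<beta> - 2) * (norm y)^2"
    unfolding u1e e3[symmetric] by (simp add: b_def algebra_simps)
  have "\<bar>norm (x + y) powr \<beta> - norm x powr \<beta> - \<beta> * norm x powr (\<beta> - 2) * inner x y\<bar>
      = \<bar>(u1 powr b - (s^2) powr b - b * (s^2) powr (b - 1) * (u1 - s^2)) + b * norm x powr (\<beta> - 2) * (norm y)^2\<bar>"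
    unfolding e1 e2 lin by (simp add: algebra_simps)
  also have "\<dots> \<le> 9 * (b * (b - 1) * c) * s powr (\<beta> - 2) * (norm y)^2 + b * norm x powr (\<beta> - 2) * (norm y)^2"
  proof -
    have "0 \<le> b * norm x powr (\<beta> - 2) * (norm y)^2" using b1 by simp
    then show ?thesis using T2 abs_triangle_ineq[of "u1 powr b - (s^2) powr b - b * (s^2) powr (b - 1) * (u1 - s^2)" "b * norm x powr (\<beta> - 2) * (norm y)^2"]
      by argo
  qed
  also have "\<dots> = Kb \<beta> * norm x powr (\<beta> - 2) * (norm y)^2"
    by (simp add: Kb_def s_def b_def c_def algebra_simps)
  finally show ?thesis .
qed


lemma diff_bound1:
  fixes x y :: "'a::real_normed_vector"
  assumes \<beta>: "\<beta> \<ge> 1" and y: "norm y \<le> r"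
  shows "\<bar>norm (x + y) powr \<beta> - norm x powr \<beta>\<bar> \<le> \<beta> * (norm x + r) powr (\<beta> - 1) * r"
proof -
  have key: "v powr \<beta> - u powr \<beta> \<le> \<beta> * (norm x + r) powr (\<beta> - 1) * r"
    if "0 \<le> u" "u \<le> v" "v \<le> norm x + r" "v - u \<le> r" for u v
  proof -
    have "v powr \<beta> - u powr \<beta> \<le> \<beta> * v powr (\<beta> - 1) * (v - u)" by (rule powr_diff_bound) (use that \<beta> in auto)
    also have "\<dots> \<le> \<beta> * (norm x + r) powr (\<beta> - 1) * r"
      using that \<beta> by (intro mult_mono powr_mono2) auto
    finally show ?thesis .
  qed
  have t1: "norm (x + y) \<le> norm x + r" using norm_triangle_ineq[of x y] y by simp
  have t2: "\<bar>norm (x + y) - norm x\<bar> \<le> r"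
    using norm_triangle_ineq3[of "x + y" x] y by simp
  show ?thesis
  proof (cases "norm x \<le> norm (x + y)")
    case True
    moreover have "norm x powr \<beta> \<le> norm (x + y) powr \<beta>" using True \<beta> by (intro powr_mono2) auto
    ultimately show ?thesis using key[of "norm x" "norm (x + y)"] t1 t2 by auto
  next
    case False
    have "norm x \<le> norm x + r" using y norm_ge_zero[of y] by linarith
    moreover have "norm (x + y) powr \<beta> \<le> norm x powr \<beta>" using False \<beta> by (intro powr_mono2) auto
    ultimately show ?thesis using key[of "norm (x + y)" "norm x"] False t2 by auto
  qed
qed

lemma regime1_sum:
  fixes x :: "real^'n::finite"
  assumes p: "1 < p" "p < 2" and \<beta>: "\<beta> \<ge> 1" and h: "h > 0" and r: "r > 0"
  shows "\<bar>\<Sum>y\<in>grid h \<inter> ball 0 r. Jp p (norm (x + y) powr \<beta> - norm x powr \<beta>)\<bar>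
     \<le> real (card (grid h \<inter> ball (0::real^'n) r)) * (\<beta> * (norm x + r) powr (\<beta> - 1) * r) powr (p - 1)"
proof -
  let ?S = "grid h \<inter> ball (0::real^'n) r"
  have "\<bar>\<Sum>y\<in>?S. Jp p (norm (x + y) powr \<beta> - norm x powr \<beta>)\<bar> \<le> (\<Sum>y\<in>?S. \<bar>Jp p (norm (x + y) powr \<beta> - norm x powr \<beta>)\<bar>)"
    by (rule sum_abs)
  also have "\<dots> \<le> (\<Sum>y\<in>?S. (\<beta> * (norm x + r) powr (\<beta> - 1) * r) powr (p - 1))"
  proof (rule sum_mono)
    fix y assume "y \<in> ?S"
    then have "norm y \<le> r" by simp
    then show "\<bar>Jp p (norm (x + y) powr \<beta> - norm x powr \<beta>)\<bar> \<le> (\<beta> * (norm x + r) powr (\<beta> - 1) * r) powr (p - 1)"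
      unfolding Jp_abs using p diff_bound1[OF \<beta>, of y r x] by (intro powr_mono2) auto
  qed
  also have "\<dots> = real (card ?S) * (\<beta> * (norm x + r) powr (\<beta> - 1) * r) powr (p - 1)" by simp
  finally show ?thesis .
qed

lemma grid_uminus: "y \<in> grid h \<Longrightarrow> - y \<in> grid h"
proof -
  assume "y \<in> grid h"
  then have "\<forall>i. \<exists>k::int. y $ i = h * of_int k" by (simp add: grid_def)
  then have "\<forall>i. \<exists>k::int. (- y) $ i = h * of_int k" by (metis mult_minus_right of_int_minus vector_uminus_component)
  then show ?thesis by (simp add: grid_def)
qed

lemma sum_S_uminus:
  "(\<Sum>y\<in>grid h \<inter> ball (0::real^'n::finite) r. F (- y)) = (\<Sum>y\<in>grid h \<inter> ball 0 r. F y)"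
proof -
  have im: "uminus ` (grid h \<inter> ball (0::real^'n) r) = grid h \<inter> ball 0 r"
  proof
    show "uminus ` (grid h \<inter> ball (0::real^'n) r) \<subseteq> grid h \<inter> ball 0 r" using grid_uminus by auto
    show "grid h \<inter> ball (0::real^'n) r \<subseteq> uminus ` (grid h \<inter> ball 0 r)"
    proof
      fix y assume "y \<in> grid h \<inter> ball (0::real^'n) r"
      then have "- y \<in> grid h \<inter> ball 0 r" using grid_uminus by auto
      then show "y \<in> uminus ` (grid h \<inter> ball 0 r)" by (metis image_eqI minus_minus)
    qed
  qed
  have "(\<Sum>y\<in>grid h \<inter> ball (0::real^'n) r. F y) = (\<Sum>y\<in>uminus ` (grid h \<inter> ball (0::real^'n) r). F y)"
    using im by simp
  also have "\<dots> = (\<Sum>y\<in>grid h \<inter> ball 0 r. F (- y))"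
    by (subst sum.reindex) (auto simp: inj_on_def)
  finally show ?thesis by simp
qed

lemma inner_emb_upd:
  fixes g :: "real^'n::finite"
  assumes "k i = 0"
  shows "inner g (emb h (k(i := m))) = inner g (emb h k) + h * g $ i * of_int m"
proof -
  have "inner g (emb h (k(i := m))) = (\<Sum>j\<in>UNIV. g $ j * (h * of_int (k j)) + (if j = i then h * g $ i * of_int m else 0))"
    unfolding inner_vec_def emb_def using assms by (intro sum.cong) (auto simp: algebra_simps)
  also have "\<dots> = inner g (emb h k) + h * g $ i * of_int m"
    by (simp add: sum.distrib inner_vec_def emb_def)
  finally show ?thesis .
qed


lemma Kb_pos: "\<beta> > 2 \<Longrightarrow> Kb \<beta> > 0"
  unfolding Kb_def by (intro add_nonneg_pos mult_nonneg_nonneg) auto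

lemma regime2_sum:
  fixes x :: "real^'n::finite"
  assumes p: "1 < p" "p < 2" and \<beta>: "\<beta> > 2" and h: "h > 0" and r: "r > 0"
    and s: "norm x > 0" and rs: "r \<le> norm x / 2"
  defines "E \<equiv> Kb \<beta> * norm x powr (\<beta> - 2) * r^2"
    and "X \<equiv> 2 * nat \<lfloor>r / h\<rfloor> + 1"
  shows "\<bar>\<Sum>y\<in>grid h \<inter> ball 0 r. Jp p (norm (x + y) powr \<beta> - norm x powr \<beta>)\<bar>
     \<le> (1/2) * real X ^ (CARD('n) - 1) * (6 * E powr (p - 1) +
          2 * (12 * E * (h * (\<beta> * norm x powr (\<beta> - 1)) / (2 * real CARD('n))) powr (p - 2)) * (real X powr (p - 1) / (p - 1)))"
proof -
  let ?S = "grid h \<inter> ball (0::real^'n) r"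
  let ?N = "nat \<lfloor>r / h\<rfloor>"
  define a where "a y = norm (x + y) powr \<beta> - norm x powr \<beta>" for y :: "real^'n"
  define g where "g = (\<beta> * norm x powr (\<beta> - 2)) *\<^sub>R x"
  have E: "E > 0" using Kb_pos[OF \<beta>] s r by (simp add: E_def)
  have gy: "inner g y = \<beta> * norm x powr (\<beta> - 2) * inner x y" for y by (simp add: g_def)
  have ng: "norm g = \<beta> * norm x powr (\<beta> - 1)"
  proof -
    have "norm g = \<beta> * (norm x * norm x powr (\<beta> - 2))" using \<beta> by (simp add: g_def abs_mult)
    also have "norm x * norm x powr (\<beta> - 2) = norm x powr (\<beta> - 1)"
      using s by (simp add: powr_mult_base)
    finally show ?thesis .
  qed
  have ngpos: "norm g > 0" using ng \<beta> s by simp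
  have pair: "\<bar>Jp p (a y) - Jp p (- a (- y))\<bar> \<le> Pb p E (inner g y)" if y: "y \<in> ?S" for y
  proof (rule Jp_pair[OF p E])
    have ny: "norm y \<le> r" using y by simp
    then have ny2: "norm y \<le> norm x / 2" using rs by simp
    have "Kb \<beta> * norm x powr (\<beta> - 2) * (norm y)^2 \<le> E"
      unfolding E_def using ny Kb_pos[OF \<beta>] by (intro mult_left_mono power_mono) auto
    moreover have "\<bar>a y - inner g y\<bar> \<le> Kb \<beta> * norm x powr (\<beta> - 2) * (norm y)^2"
      using taylor_vec[OF \<beta> s ny2] by (simp add: a_def gy)
    ultimately show "\<bar>a y - inner g y\<bar> \<le> E" by linarith
    have ny2': "norm (- y) \<le> norm x / 2" using ny2 by simp
    have "\<bar>a (- y) - inner g (- y)\<bar> \<le> Kb \<beta> * norm x powr (\<beta> - 2) * (norm (- y))^2"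
      using taylor_vec[OF \<beta> s ny2'] by (simp add: a_def gy)
    then have "\<bar>- a (- y) - inner g y\<bar> \<le> Kb \<beta> * norm x powr (\<beta> - 2) * (norm y)^2"
      by (simp add: inner_minus_right abs_minus_commute)
    with \<open>Kb \<beta> * norm x powr (\<beta> - 2) * (norm y)^2 \<le> E\<close> show "\<bar>- a (- y) - inner g y\<bar> \<le> E" by linarith
  qed
  have sym: "(\<Sum>y\<in>?S. Jp p (a (- y))) = (\<Sum>y\<in>?S. Jp p (a y))"
    by (rule sum_S_uminus)
  have "2 * (\<Sum>y\<in>?S. Jp p (a y)) = (\<Sum>y\<in>?S. Jp p (a y)) + (\<Sum>y\<in>?S. Jp p (a (- y)))"
    using sym by simp
  also have "\<dots> = (\<Sum>y\<in>?S. Jp p (a y) - Jp p (- a (- y)))"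
    by (simp add: sum.distrib Jp_neg)
  finally have twice: "2 * \<bar>\<Sum>y\<in>?S. Jp p (a y)\<bar> = \<bar>\<Sum>y\<in>?S. Jp p (a y) - Jp p (- a (- y))\<bar>"
    by (metis abs_mult abs_numeral)
  have "\<bar>\<Sum>y\<in>?S. Jp p (a y) - Jp p (- a (- y))\<bar> \<le> (\<Sum>y\<in>?S. \<bar>Jp p (a y) - Jp p (- a (- y))\<bar>)"
    by (rule sum_abs)
  also have "\<dots> \<le> (\<Sum>y\<in>?S. Pb p E (inner g y))"
    by (intro sum_mono pair)
  also have "\<dots> \<le> (\<Sum>k\<in>Box ?N. Pb p E (inner g (emb h k)))"
    by (rule sum_S_Box[OF h]) (rule Pb_nonneg[OF E])
  finally have step1: "2 * \<bar>\<Sum>y\<in>?S. Jp p (a y)\<bar> \<le> (\<Sum>k\<in>Box ?N. Pb p E (inner g (emb h k)))"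
    using twice by simp
  define Mx where "Mx = Max (range (\<lambda>j. \<bar>g $ j\<bar>))"
  have "Mx \<in> range (\<lambda>j. \<bar>g $ j\<bar>)" unfolding Mx_def by (intro Max_in) auto
  then obtain i where i: "\<bar>g $ i\<bar> = Mx" by auto
  have imax: "\<bar>g $ j\<bar> \<le> \<bar>g $ i\<bar>" for j unfolding i Mx_def by (intro Max_ge) auto
  have "norm g \<le> (\<Sum>j\<in>UNIV. \<bar>g $ j\<bar>)" by (rule norm_le_l1_cart)
  also have "\<dots> \<le> real (card (UNIV::'n set)) * \<bar>g $ i\<bar>"
    by (rule sum_bounded_above) (rule imax)
  finally have gi: "norm g \<le> real CARD('n) * \<bar>g $ i\<bar>" .
  have d0: "real CARD('n) > 0" by simp
  have gi0: "\<bar>g $ i\<bar> > 0" using gi ngpos d0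
    by (metis mult_eq_0_iff not_le order_le_less zero_less_abs_iff abs_ge_zero)
  define \<sigma> where "\<sigma> = h * g $ i"
  have \<sigma>0: "\<sigma> \<noteq> 0" using gi0 h by (simp add: \<sigma>_def)
  have "(\<Sum>k\<in>Box ?N. Pb p E (inner g (emb h k)))
      = (\<Sum>k'\<in>{k\<in>Box ?N. k i = 0}. \<Sum>m\<in>{- int ?N..int ?N}. Pb p E (inner g (emb h (k'(i := m)))))"
    by (rule sum_Box_split)
  also have "\<dots> = (\<Sum>k'\<in>{k\<in>Box ?N. k i = 0}. \<Sum>m\<in>{- int ?N..int ?N}. Pb p E (inner g (emb h k') + \<sigma> * of_int m))"
    by (intro sum.cong refl) (simp add: inner_emb_upd \<sigma>_def)
  also have "\<dots> \<le> (\<Sum>k'\<in>{k\<in>Box ?N. k i = 0}. 6 * E powr (p - 1) + 2 * (12 * E * (\<bar>\<sigma>\<bar> / 2) powr (p - 2)) * Sq (p - 2) (2 * ?N + 1))"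
  proof (rule sum_mono)
    fix k' assume "k' \<in> {k\<in>Box ?N. k i = 0}"
    show "(\<Sum>m\<in>{- int ?N..int ?N}. Pb p E (inner g (emb h k') + \<sigma> * of_int m))
        \<le> 6 * E powr (p - 1) + 2 * (12 * E * (\<bar>\<sigma>\<bar> / 2) powr (p - 2)) * Sq (p - 2) (2 * ?N + 1)"
      by (rule sum1d[OF p \<sigma>0]) (use E Pb_nonneg[OF E] Pb_le_A[OF p E] Pb_le_B[OF p E] in auto)
  qed
  also have "\<dots> = real X ^ (CARD('n) - 1) * (6 * E powr (p - 1) + 2 * (12 * E * (\<bar>\<sigma>\<bar> / 2) powr (p - 2)) * Sq (p - 2) X)"
    by (simp add: card_Box' X_def)
  also have "\<dots> \<le> real X ^ (CARD('n) - 1) * (6 * E powr (p - 1) +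
          2 * (12 * E * (h * (\<beta> * norm x powr (\<beta> - 1)) / (2 * real CARD('n))) powr (p - 2)) * (real X powr (p - 1) / (p - 1)))"
  proof -
    have "h * (\<beta> * norm x powr (\<beta> - 1)) / (2 * real CARD('n)) \<le> \<bar>\<sigma>\<bar> / 2"
    proof -
      have "h * norm g \<le> h * (real CARD('n) * \<bar>g $ i\<bar>)" using gi h by simp
      then have "h * norm g / real CARD('n) \<le> h * \<bar>g $ i\<bar>" using d0 by (simp add: field_simps)
      then show ?thesis using h by (simp add: \<sigma>_def ng abs_mult field_simps)
    qed
    moreover have "h * (\<beta> * norm x powr (\<beta> - 1)) / (2 * real CARD('n)) > 0" using h \<beta> s by simp
    ultimately have A: "(\<bar>\<sigma>\<bar> / 2) powr (p - 2) \<le> (h * (\<beta> * norm x powr (\<beta> - 1)) / (2 * real CARD('n))) powr (p - 2)"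
      using p by (intro powr_mono2') auto
    have B: "Sq (p - 2) X \<le> real X powr (p - 1) / (p - 1)" by (rule Sq_bound[OF p])
    have C: "0 \<le> Sq (p - 2) X" by (simp add: Sq_def sum_nonneg)
    have "2 * (12 * E * (\<bar>\<sigma>\<bar> / 2) powr (p - 2)) * Sq (p - 2) X \<le>
          2 * (12 * E * (h * (\<beta> * norm x powr (\<beta> - 1)) / (2 * real CARD('n))) powr (p - 2)) * (real X powr (p - 1) / (p - 1))"
      using A B C E by (intro mult_mono mult_left_mono) auto
    then show ?thesis by (intro mult_left_mono) auto
  qed
  finally have step2: "2 * \<bar>\<Sum>y\<in>?S. Jp p (a y)\<bar> \<le> real X ^ (CARD('n) - 1) * (6 * E powr (p - 1) +
          2 * (12 * E * (h * (\<beta> * norm x powr (\<beta> - 1)) / (2 * real CARD('n))) powr (p - 2)) * (real X powr (p - 1) / (p - 1)))"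
    using step1 by linarith
  then show ?thesis by (simp add: a_def)
qed


lemma eq_by_ln: "0 < a \<Longrightarrow> 0 < b \<Longrightarrow> ln a = ln b \<Longrightarrow> a = b" for a b :: real
  by simp

lemma id2: 
  fixes h r s K \<beta> d p :: real
  assumes h: "h > 0" and r: "r > 0" and s: "s > 0" and K: "K > 0" and \<beta>: "\<beta> > 2" and d: "d \<ge> 1"
  shows "h powr d * r powr (- (p + d)) * ((3 * r / h) powr (d - 1) * (3 * r / h) powr (p - 1) * (K * s powr (\<beta> - 2) * r^2) * (h * (\<beta> * s powr (\<beta> - 1)) / (2 * d)) powr (p - 2))
        = 3 powr (d - 1) * 3 powr (p - 1) * K * (\<beta> / (2 * d)) powr (p - 2) * s powr ((\<beta> - 2) + (\<beta> - 1) * (p - 2))"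
proof -
  define R where "R = 3 * r / h"
  define E where "E = K * s powr (\<beta> - 2) * r^2"
  define Q where "Q = h * (\<beta> * s powr (\<beta> - 1)) / (2 * d)"
  have R0: "R > 0" and E0: "E > 0" and Q0: "Q > 0" using h r s K \<beta> d by (auto simp: R_def E_def Q_def)
  have lR: "ln R = ln 3 + ln r - ln h" using h r by (simp add: R_def ln_mult_pos ln_divide_pos)
  have lE: "ln E = ln K + (\<beta> - 2) * ln s + 2 * ln r" using K s r by (simp add: E_def ln_mult_pos ln_realpow)
  have lQ: "ln Q = ln h + ln \<beta> + (\<beta> - 1) * ln s - ln 2 - ln d" using h s \<beta> d
    by (simp add: Q_def ln_mult_pos ln_divide_pos)
  have lB: "ln (\<beta> / (2 * d)) = ln \<beta> - ln 2 - ln d" using \<beta> d by (simp add: ln_mult_pos ln_divide_pos)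
  have L: "ln (h powr d * r powr (- (p + d)) * (R powr (d - 1) * R powr (p - 1) * E * Q powr (p - 2)))
      = d * ln h - (p + d) * ln r + (d - 1) * ln R + (p - 1) * ln R + ln E + (p - 2) * ln Q"
    using h r R0 E0 Q0 by (simp add: ln_mult_pos algebra_simps)
  have Rt: "ln (3 powr (d - 1) * 3 powr (p - 1) * K * (\<beta> / (2 * d)) powr (p - 2) * s powr ((\<beta> - 2) + (\<beta> - 1) * (p - 2)))
      = (d - 1) * ln 3 + (p - 1) * ln 3 + ln K + (p - 2) * ln (\<beta> / (2 * d)) + ((\<beta> - 2) + (\<beta> - 1) * (p - 2)) * ln s"
    using K s \<beta> d by (simp add: ln_mult_pos)
  have "h powr d * r powr (- (p + d)) * (R powr (d - 1) * R powr (p - 1) * E * Q powr (p - 2))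
      = 3 powr (d - 1) * 3 powr (p - 1) * K * (\<beta> / (2 * d)) powr (p - 2) * s powr ((\<beta> - 2) + (\<beta> - 1) * (p - 2))"
  proof (rule eq_by_ln)
    show "0 < h powr d * r powr (- (p + d)) * (R powr (d - 1) * R powr (p - 1) * E * Q powr (p - 2))"
      using h r R0 E0 Q0 by simp
    show "0 < 3 powr (d - 1) * 3 powr (p - 1) * K * (\<beta> / (2 * d)) powr (p - 2) * s powr ((\<beta> - 2) + (\<beta> - 1) * (p - 2))"
      using K s \<beta> d by simp
    show "ln (h powr d * r powr (- (p + d)) * (R powr (d - 1) * R powr (p - 1) * E * Q powr (p - 2))) =
      ln (3 powr (d - 1) * 3 powr (p - 1) * K * (\<beta> / (2 * d)) powr (p - 2) * s powr ((\<beta> - 2) + (\<beta> - 1) * (p - 2)))"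
      unfolding L Rt lR lE lQ lB by (simp add: algebra_simps)
  qed
  then show ?thesis by (simp add: R_def E_def Q_def)
qed


lemma id1:
  fixes h r s K \<beta> d p :: real
  assumes h: "h > 0" and r: "r > 0" and s: "s > 0" and K: "K > 0"
  shows "h powr d * r powr (- (p + d)) * ((3 * r / h) powr (d - 1) * (K * s powr (\<beta> - 2) * r^2) powr (p - 1))
     = 3 powr (d - 1) * K powr (p - 1) * s powr ((\<beta> - 2) * (p - 1)) * (h * r powr (p - 3))"
proof -
  define R where "R = 3 * r / h"
  define E where "E = K * s powr (\<beta> - 2) * r^2"
  have R0: "R > 0" and E0: "E > 0" using h r s K by (auto simp: R_def E_def)
  have lR: "ln R = ln 3 + ln r - ln h" using h r by (simp add: R_def ln_mult_pos ln_divide_pos)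
  have lE: "ln E = ln K + (\<beta> - 2) * ln s + 2 * ln r" using K s r by (simp add: E_def ln_mult_pos ln_realpow)
  have L: "ln (h powr d * r powr (- (p + d)) * (R powr (d - 1) * E powr (p - 1)))
      = d * ln h - (p + d) * ln r + (d - 1) * ln R + (p - 1) * ln E"
    using h r R0 E0 by (simp add: ln_mult_pos algebra_simps)
  have Rt: "ln (3 powr (d - 1) * K powr (p - 1) * s powr ((\<beta> - 2) * (p - 1)) * (h * r powr (p - 3)))
      = (d - 1) * ln 3 + (p - 1) * ln K + ((\<beta> - 2) * (p - 1)) * ln s + ln h + (p - 3) * ln r"
    using K s h r by (simp add: ln_mult_pos)
  have "h powr d * r powr (- (p + d)) * (R powr (d - 1) * E powr (p - 1))
      = 3 powr (d - 1) * K powr (p - 1) * s powr ((\<beta> - 2) * (p - 1)) * (h * r powr (p - 3))"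
  proof (rule eq_by_ln)
    show "0 < h powr d * r powr (- (p + d)) * (R powr (d - 1) * E powr (p - 1))"
      using h r R0 E0 by simp
    show "0 < 3 powr (d - 1) * K powr (p - 1) * s powr ((\<beta> - 2) * (p - 1)) * (h * r powr (p - 3))"
      using K s h r by simp
    show "ln (h powr d * r powr (- (p + d)) * (R powr (d - 1) * E powr (p - 1))) =
      ln (3 powr (d - 1) * K powr (p - 1) * s powr ((\<beta> - 2) * (p - 1)) * (h * r powr (p - 3)))"
      unfolding L Rt lR lE by (simp add: algebra_simps)
  qed
  then show ?thesis by (simp add: R_def E_def)
qed

lemma id0:
  fixes h r \<beta> d p \<theta> :: real
  assumes h: "h > 0" and r: "r > 0" and \<beta>: "\<beta> > 0"
  shows "h powr d * r powr (- (p + d)) * ((3 * r / h) powr d * (\<beta> * (2 * r powr \<theta>) powr (\<beta> - 1) * r) powr (p - 1))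
     = 3 powr d * \<beta> powr (p - 1) * 2 powr ((\<beta> - 1) * (p - 1)) * r powr ((\<beta> - 1) * (p - 1) * \<theta> - 1)"
proof -
  define R where "R = 3 * r / h"
  define M where "M = \<beta> * (2 * r powr \<theta>) powr (\<beta> - 1) * r"
  have R0: "R > 0" and M0: "M > 0" using h r \<beta> by (auto simp: R_def M_def)
  have lR: "ln R = ln 3 + ln r - ln h" using h r by (simp add: R_def ln_mult_pos ln_divide_pos)
  have lM: "ln M = ln \<beta> + (\<beta> - 1) * (ln 2 + \<theta> * ln r) + ln r" using \<beta> r by (simp add: M_def ln_mult_pos)
  have L: "ln (h powr d * r powr (- (p + d)) * (R powr d * M powr (p - 1)))
      = d * ln h - (p + d) * ln r + d * ln R + (p - 1) * ln M"
    using h r R0 M0 by (simp add: ln_mult_pos algebra_simps)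
  have Rt: "ln (3 powr d * \<beta> powr (p - 1) * 2 powr ((\<beta> - 1) * (p - 1)) * r powr ((\<beta> - 1) * (p - 1) * \<theta> - 1))
      = d * ln 3 + (p - 1) * ln \<beta> + ((\<beta> - 1) * (p - 1)) * ln 2 + ((\<beta> - 1) * (p - 1) * \<theta> - 1) * ln r"
    using \<beta> r by (simp add: ln_mult_pos)
  have "h powr d * r powr (- (p + d)) * (R powr d * M powr (p - 1))
      = 3 powr d * \<beta> powr (p - 1) * 2 powr ((\<beta> - 1) * (p - 1)) * r powr ((\<beta> - 1) * (p - 1) * \<theta> - 1)"
  proof (rule eq_by_ln)
    show "0 < h powr d * r powr (- (p + d)) * (R powr d * M powr (p - 1))"
      using h r R0 M0 by simp
    show "0 < 3 powr d * \<beta> powr (p - 1) * 2 powr ((\<beta> - 1) * (p - 1)) * r powr ((\<beta> - 1) * (p - 1) * \<theta> - 1)"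
      using \<beta> r by simp
    show "ln (h powr d * r powr (- (p + d)) * (R powr d * M powr (p - 1))) =
      ln (3 powr d * \<beta> powr (p - 1) * 2 powr ((\<beta> - 1) * (p - 1)) * r powr ((\<beta> - 1) * (p - 1) * \<theta> - 1))"
      unfolding L Rt lR lM by (simp add: algebra_simps)
  qed
  then show ?thesis by (simp add: R_def M_def)
qed



lemma Delta_abs:
  fixes x :: "real^'n::finite"
  assumes h: "h > 0" and r: "r > 0"
  shows "\<bar>discrete_pLap p h r \<phi> x\<bar> = \<bar>1 / (Ddp TYPE('n) p * omega TYPE('n))\<bar> *
     (h powr real CARD('n) * r powr (- (p + real CARD('n)))) * \<bar>\<Sum>y\<in>grid h \<inter> ball 0 r. Jp p (\<phi> (x + y) - \<phi> x)\<bar>"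
proof -
  have "discrete_pLap p h r \<phi> x = (1 / (Ddp TYPE('n) p * omega TYPE('n))) *
     (h powr real CARD('n) * r powr (- (p + real CARD('n)))) * (\<Sum>y\<in>grid h \<inter> ball 0 r. Jp p (\<phi> (x + y) - \<phi> x))"
    unfolding discrete_pLap_def powr_minus using h r
    by (simp add: powr_realpow divide_inverse inverse_mult_distrib mult_ac)
  then show ?thesis using h r by (simp add: abs_mult)
qed

lemma X_bound:
  assumes h: "h > 0" and hr: "h \<le> r"
  shows "1 \<le> real (2 * nat \<lfloor>r / h\<rfloor> + 1)" "real (2 * nat \<lfloor>r / h\<rfloor> + 1) \<le> 3 * r / h"
proof -
  have rh: "r / h \<ge> 1" using h hr by (simp add: field_simps)
  then have f0: "\<lfloor>r / h\<rfloor> \<ge> 0" by simp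
  have "real (2 * nat \<lfloor>r / h\<rfloor> + 1) = 2 * of_int \<lfloor>r / h\<rfloor> + 1" using f0 by simp
  also have "\<dots> \<le> 2 * (r / h) + 1" using of_int_floor_le[of "r / h"] by linarith
  also have "\<dots> \<le> 3 * r / h" using rh by simp
  finally show "real (2 * nat \<lfloor>r / h\<rfloor> + 1) \<le> 3 * r / h" .
  show "1 \<le> real (2 * nat \<lfloor>r / h\<rfloor> + 1)" by simp
qed


definition C0 :: "'n::finite itself \<Rightarrow> real \<Rightarrow> real" where
  "C0 T p = \<bar>1 / (Ddp T p * omega T)\<bar>"

definition K0 :: "'n::finite itself \<Rightarrow> real \<Rightarrow> real \<Rightarrow> real" where
  "K0 T p \<beta> = C0 T p * 3 powr real CARD('n) * \<beta> powr (p - 1) * 2 powr ((\<beta> - 1) * (p - 1))"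

definition K1 :: "'n::finite itself \<Rightarrow> real \<Rightarrow> real \<Rightarrow> real" where
  "K1 T p \<beta> = C0 T p * 3 * 3 powr (real CARD('n) - 1) * Kb \<beta> powr (p - 1)"

definition K2 :: "'n::finite itself \<Rightarrow> real \<Rightarrow> real \<Rightarrow> real" where
  "K2 T p \<beta> = C0 T p * (12 / (p - 1)) * (3 powr (real CARD('n) - 1) * 3 powr (p - 1) * Kb \<beta> *
     (\<beta> / (2 * real CARD('n))) powr (p - 2))"

lemma pointwise:
  fixes x :: "real^'n::finite"
  assumes p: "1 < p" "p < 2" and \<beta>: "\<beta> > p / (p - 1)" and h: "h > 0" and r: "r > 0"
    and hr: "h \<le> r" and r1: "r \<le> 1"
    and r\<theta>: "r powr (1 - ((\<beta> - 1) * (p - 1) + 1) / (2 * ((\<beta> - 1) * (p - 1)))) \<le> 1/2"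
    and x1: "norm x \<le> 1"
  shows "\<bar>discrete_pLap p h r (\<lambda>z. norm z powr \<beta>) x\<bar> \<le>
     K0 TYPE('n) p \<beta> * r powr (((\<beta> - 1) * (p - 1) - 1) / 2) + K1 TYPE('n) p \<beta> * (h * r powr (p - 3))
     + K2 TYPE('n) p \<beta> * norm x powr ((\<beta> - 1) * (p - 1) - 1)"
proof -
  define \<gamma> where "\<gamma> = (\<beta> - 1) * (p - 1)"
  define \<theta> where "\<theta> = (\<gamma> + 1) / (2 * \<gamma>)"
  define s where "s = norm x"
  define d where "d = real CARD('n)"
  define X where "X = 2 * nat \<lfloor>r / h\<rfloor> + 1"
  define P where "P = h powr d * r powr (- (p + d))"
  define \<Sigma> where "\<Sigma> = (\<Sum>y\<in>grid h \<inter> ball (0::real^'n) r. Jp p (norm (x + y) powr \<beta> - norm x powr \<beta>))"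
  have p1: "p - 1 > 0" using p by simp
  have \<beta>2: "\<beta> > 2"
  proof -
    have "p / (p - 1) > 2" using p p1 by (simp add: field_simps)
    then show ?thesis using \<beta> by simp
  qed
  have \<gamma>1: "\<gamma> > 1"
  proof -
    have "\<beta> * (p - 1) > p" using \<beta> p1 by (simp add: field_simps)
    then show ?thesis by (simp add: \<gamma>_def algebra_simps)
  qed
  have \<theta>1: "\<theta> \<le> 1" using \<gamma>1 by (simp add: \<theta>_def field_simps)
  have \<gamma>\<theta>: "\<gamma> * \<theta> - 1 = (\<gamma> - 1) / 2" using \<gamma>1 by (simp add: \<theta>_def field_simps)
  have d1: "d \<ge> 1" by (simp add: d_def)
  have C0: "C0 TYPE('n) p \<ge> 0" by (simp add: C0_def)
  have P0: "P > 0" using h r by (simp add: P_def)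
  have Delta: "\<bar>discrete_pLap p h r (\<lambda>z. norm z powr \<beta>) x\<bar> = C0 TYPE('n) p * P * \<bar>\<Sigma>\<bar>"
    using Delta_abs[OF h r, of p "\<lambda>z. norm z powr \<beta>" x] by (simp add: C0_def P_def d_def \<Sigma>_def)
  have X1: "1 \<le> real X" and X3: "real X \<le> 3 * r / h" using X_bound[OF h hr] by (simp_all add: X_def)
  have K1: "K1 TYPE('n) p \<beta> \<ge> 0" using C0 by (simp add: K1_def)
  have K2: "K2 TYPE('n) p \<beta> \<ge> 0" using C0 p Kb_pos[OF \<beta>2] by (simp add: K2_def)
  have K0: "K0 TYPE('n) p \<beta> \<ge> 0" using C0 by (simp add: K0_def)
  have t1: "K1 TYPE('n) p \<beta> * (h * r powr (p - 3)) \<ge> 0" using K1 h by simp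
  have t2: "K2 TYPE('n) p \<beta> * norm x powr ((\<beta> - 1) * (p - 1) - 1) \<ge> 0" using K2 by simp
  have t0: "K0 TYPE('n) p \<beta> * r powr (((\<beta> - 1) * (p - 1) - 1) / 2) \<ge> 0" using K0 by simp
  show ?thesis
  proof (cases "s \<le> r powr \<theta>")
    case True
    have rr: "r \<le> r powr \<theta>" using powr_mono'[OF \<theta>1, of r] r r1 by simp
    have sr: "s + r \<le> 2 * r powr \<theta>" using True rr by simp
    have "\<bar>\<Sigma>\<bar> \<le> real (card (grid h \<inter> ball (0::real^'n) r)) * (\<beta> * (s + r) powr (\<beta> - 1) * r) powr (p - 1)"
      unfolding \<Sigma>_def s_def using regime1_sum[OF p _ h r, of \<beta> x] \<beta>2 by simp
    also have "\<dots> \<le> (3 * r / h) powr d * (\<beta> * (2 * r powr \<theta>) powr (\<beta> - 1) * r) powr (p - 1)"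
    proof (intro mult_mono)
      have "real (card (grid h \<inter> ball (0::real^'n) r)) \<le> real X ^ CARD('n)"
        using card_S[OF h, of r] unfolding X_def by (metis of_nat_le_iff of_nat_power)
      also have "\<dots> \<le> (3 * r / h) ^ CARD('n)" using X1 X3 by (intro power_mono) auto
      also have "\<dots> = (3 * r / h) powr d" using h r by (simp add: d_def powr_realpow)
      finally show "real (card (grid h \<inter> ball (0::real^'n) r)) \<le> (3 * r / h) powr d" .
      have "(s + r) powr (\<beta> - 1) \<le> (2 * r powr \<theta>) powr (\<beta> - 1)"
        using sr r \<beta>2 by (intro powr_mono2) (auto simp: s_def)
      then have "\<beta> * (s + r) powr (\<beta> - 1) * r \<le> \<beta> * (2 * r powr \<theta>) powr (\<beta> - 1) * r"
        using \<beta>2 r by (intro mult_right_mono mult_left_mono) auto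
      then show "(\<beta> * (s + r) powr (\<beta> - 1) * r) powr (p - 1) \<le> (\<beta> * (2 * r powr \<theta>) powr (\<beta> - 1) * r) powr (p - 1)"
        using p1 \<beta>2 r by (intro powr_mono2) (auto simp: s_def)
    qed auto
    finally have S1: "\<bar>\<Sigma>\<bar> \<le> (3 * r / h) powr d * (\<beta> * (2 * r powr \<theta>) powr (\<beta> - 1) * r) powr (p - 1)" .
    have "P * ((3 * r / h) powr d * (\<beta> * (2 * r powr \<theta>) powr (\<beta> - 1) * r) powr (p - 1))
        = 3 powr d * \<beta> powr (p - 1) * 2 powr ((\<beta> - 1) * (p - 1)) * r powr ((\<beta> - 1) * (p - 1) * \<theta> - 1)"
      unfolding P_def using id0[OF h r, of \<beta> d p \<theta>] \<beta>2 by simp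
    also have "(\<beta> - 1) * (p - 1) * \<theta> - 1 = ((\<beta> - 1) * (p - 1) - 1) / 2" using \<gamma>\<theta> by (simp add: \<gamma>_def)
    finally have ident: "P * ((3 * r / h) powr d * (\<beta> * (2 * r powr \<theta>) powr (\<beta> - 1) * r) powr (p - 1))
        = 3 powr d * \<beta> powr (p - 1) * 2 powr ((\<beta> - 1) * (p - 1)) * r powr (((\<beta> - 1) * (p - 1) - 1) / 2)" .
    have "\<bar>discrete_pLap p h r (\<lambda>z. norm z powr \<beta>) x\<bar> \<le> C0 TYPE('n) p * (P * ((3 * r / h) powr d * (\<beta> * (2 * r powr \<theta>) powr (\<beta> - 1) * r) powr (p - 1)))"
      unfolding Delta using S1 C0 P0 by (simp add: mult.assoc mult_left_mono)
    also have "\<dots> = K0 TYPE('n) p \<beta> * r powr (((\<beta> - 1) * (p - 1) - 1) / 2)"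
      unfolding ident by (simp add: K0_def d_def mult_ac)
    finally show ?thesis using t1 t2 by linarith
  next
    case False
    have s0: "s > 0" using False r by (smt (verit) powr_gt_zero)
    have "r = r powr \<theta> * r powr (1 - \<theta>)" using r by (simp add: powr_add[symmetric])
    also have "\<dots> \<le> r powr \<theta> * (1/2)" using r\<theta> by (intro mult_left_mono) (auto simp: \<theta>_def \<gamma>_def)
    finally have rs: "r \<le> norm x / 2" using False by (simp add: s_def)
    define E where "E = Kb \<beta> * norm x powr (\<beta> - 2) * r^2"
    define Q where "Q = h * (\<beta> * norm x powr (\<beta> - 1)) / (2 * real CARD('n))"
    have E0: "E > 0" using Kb_pos[OF \<beta>2] s0 r by (simp add: E_def s_def)
    have Q0: "Q > 0" using h \<beta>2 s0 by (simp add: Q_def s_def)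
    have "\<bar>\<Sigma>\<bar> \<le> (1/2) * real X ^ (CARD('n) - 1) * (6 * E powr (p - 1) + 2 * (12 * E * Q powr (p - 2)) * (real X powr (p - 1) / (p - 1)))"
      unfolding \<Sigma>_def E_def Q_def X_def using regime2_sum[OF p \<beta>2 h r _ rs] s0 by (simp add: s_def)
    also have "\<dots> = 3 * (real X ^ (CARD('n) - 1) * E powr (p - 1)) + (12 / (p - 1)) * (real X ^ (CARD('n) - 1) * real X powr (p - 1) * E * Q powr (p - 2))"
      using p1 by (simp add: field_simps)
    also have "\<dots> \<le> 3 * ((3 * r / h) powr (d - 1) * E powr (p - 1)) + (12 / (p - 1)) * ((3 * r / h) powr (d - 1) * (3 * r / h) powr (p - 1) * E * Q powr (p - 2))"
    proof -
      have a: "real X ^ (CARD('n) - 1) \<le> (3 * r / h) powr (d - 1)"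
      proof -
        have "real X ^ (CARD('n) - 1) \<le> (3 * r / h) ^ (CARD('n) - 1)" using X1 X3 by (intro power_mono) auto
        also have "\<dots> = (3 * r / h) powr real (CARD('n) - 1)" using h r by (intro powr_realpow[symmetric]) simp
        also have "real (CARD('n) - 1) = d - 1" by (simp add: d_def of_nat_diff)
        finally show ?thesis .
      qed
      have b: "real X powr (p - 1) \<le> (3 * r / h) powr (p - 1)" using X1 X3 p1 by (intro powr_mono2) auto
      have c: "0 \<le> E * Q powr (p - 2)" using E0 by simp
      show ?thesis using a b c p1 E0
        by (intro add_mono mult_left_mono mult_right_mono mult_mono) auto
    qed
    finally have S2: "\<bar>\<Sigma>\<bar> \<le> 3 * ((3 * r / h) powr (d - 1) * E powr (p - 1)) + (12 / (p - 1)) * ((3 * r / h) powr (d - 1) * (3 * r / h) powr (p - 1) * E * Q powr (p - 2))" .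
    have id1: "P * ((3 * r / h) powr (d - 1) * E powr (p - 1)) = 3 powr (d - 1) * Kb \<beta> powr (p - 1) * s powr ((\<beta> - 2) * (p - 1)) * (h * r powr (p - 3))"
      unfolding P_def E_def s_def using id1[OF h r _ Kb_pos[OF \<beta>2], of "norm x" d p \<beta>] s0 by (simp add: s_def)
    have id2: "P * ((3 * r / h) powr (d - 1) * (3 * r / h) powr (p - 1) * E * Q powr (p - 2))
        = 3 powr (d - 1) * 3 powr (p - 1) * Kb \<beta> * (\<beta> / (2 * d)) powr (p - 2) * s powr ((\<beta> - 2) + (\<beta> - 1) * (p - 2))"
      unfolding P_def E_def s_def Q_def using id2[OF h r _ Kb_pos[OF \<beta>2] \<beta>2 d1, of "norm x" p] s0 by (simp add: s_def d_def)
    have ex: "(\<beta> - 2) + (\<beta> - 1) * (p - 2) = (\<beta> - 1) * (p - 1) - 1" by (simp add: algebra_simps)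
    have s1: "s powr ((\<beta> - 2) * (p - 1)) \<le> 1" using s0 x1 \<beta>2 p1 by (intro powr_le1) (auto simp: s_def)
    have "\<bar>discrete_pLap p h r (\<lambda>z. norm z powr \<beta>) x\<bar> \<le> C0 TYPE('n) p * (P * (3 * ((3 * r / h) powr (d - 1) * E powr (p - 1)) + (12 / (p - 1)) * ((3 * r / h) powr (d - 1) * (3 * r / h) powr (p - 1) * E * Q powr (p - 2))))"
      unfolding Delta using S2 C0 P0 by (simp add: mult.assoc mult_left_mono)
    also have "\<dots> = C0 TYPE('n) p * 3 * (P * ((3 * r / h) powr (d - 1) * E powr (p - 1)))
        + C0 TYPE('n) p * (12 / (p - 1)) * (P * ((3 * r / h) powr (d - 1) * (3 * r / h) powr (p - 1) * E * Q powr (p - 2)))"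
      by (simp add: algebra_simps)
    also have "\<dots> = C0 TYPE('n) p * 3 * (3 powr (d - 1) * Kb \<beta> powr (p - 1) * s powr ((\<beta> - 2) * (p - 1)) * (h * r powr (p - 3)))
        + K2 TYPE('n) p \<beta> * norm x powr ((\<beta> - 1) * (p - 1) - 1)"
      unfolding id1 id2 ex by (simp add: K2_def d_def s_def mult_ac)
    also have "C0 TYPE('n) p * 3 * (3 powr (d - 1) * Kb \<beta> powr (p - 1) * s powr ((\<beta> - 2) * (p - 1)) * (h * r powr (p - 3)))
        \<le> K1 TYPE('n) p \<beta> * (h * r powr (p - 3))"
    proof -
      have "C0 TYPE('n) p * 3 * (3 powr (d - 1) * Kb \<beta> powr (p - 1) * s powr ((\<beta> - 2) * (p - 1)) * (h * r powr (p - 3)))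
         = (C0 TYPE('n) p * 3 * 3 powr (d - 1) * Kb \<beta> powr (p - 1) * (h * r powr (p - 3))) * s powr ((\<beta> - 2) * (p - 1))"
        by (simp add: mult_ac)
      also have "\<dots> \<le> (C0 TYPE('n) p * 3 * 3 powr (d - 1) * Kb \<beta> powr (p - 1) * (h * r powr (p - 3))) * 1"
        using s1 C0 h by (intro mult_left_mono) auto
      finally show ?thesis by (simp add: K1_def d_def)
    qed
    finally show ?thesis using t0 by linarith
  qed
qed


theorem lemmaA3:
  fixes p \<beta> :: real and h :: "real \<Rightarrow> real"
  assumes "1 < p" "p < 2"
    and "\<And>r. r > 0 \<Longrightarrow> h r > 0"
    and "((\<lambda>r. h r / r powr (p / (p - 1))) \<longlongrightarrow> 0) (at_right 0)"
    and "\<beta> > p / (p - 1)"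
  shows "((\<lambda>(r, x::real^'n). discrete_pLap p (h r) r (\<lambda>z. norm z powr \<beta>) x) \<longlongrightarrow> 0)
           (at (0, 0) within ({0<..} \<times> UNIV))"
proof -
  note p = assms(1,2) and hpos = assms(3) and hlim = assms(4) and \<beta> = assms(5)
  define F where "F = at ((0::real), (0::real^'n)) within ({0<..} \<times> UNIV)"
  define \<gamma> where "\<gamma> = (\<beta> - 1) * (p - 1)"
  define \<theta> where "\<theta> = (\<gamma> + 1) / (2 * \<gamma>)"
  define q' where "q' = p / (p - 1)"
  have p1: "p - 1 > 0" using p by simp
  have q'2: "q' > 2" using p p1 by (simp add: q'_def field_simps)
  have \<gamma>1: "\<gamma> > 1"
  proof -
    have "\<beta> * (p - 1) > p" using \<beta> p1 by (simp add: field_simps)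
    then show ?thesis by (simp add: \<gamma>_def algebra_simps)
  qed
  have \<theta>1: "\<theta> < 1" using \<gamma>1 by (simp add: \<theta>_def field_simps)
  have fst_lim: "filterlim fst (at_right 0) F"
    unfolding filterlim_at F_def
  proof
    show "\<forall>\<^sub>F x in at ((0::real), (0::real^'n)) within {0<..} \<times> UNIV. fst x \<in> {0<..} \<and> fst x \<noteq> 0"
      unfolding eventually_at_filter by (rule always_eventually) (auto simp: mem_Times_iff)
    show "(fst \<longlongrightarrow> 0) (at ((0::real), (0::real^'n)) within {0<..} \<times> UNIV)"
      using tendsto_fst[OF tendsto_ident_at[of "(0::real, 0::real^'n)" "{0<..} \<times> UNIV"]] by simp
  qed
  have snd_lim: "(snd \<longlongrightarrow> (0::real^'n)) F"
    unfolding F_def using tendsto_snd[OF tendsto_ident_at[of "(0::real, 0::real^'n)" "{0<..} \<times> UNIV"]] by simp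
  have nsnd_lim: "((\<lambda>z. norm (snd z)) \<longlongrightarrow> 0) F" using tendsto_norm_zero[OF snd_lim] .
  have pw_lim: "((\<lambda>r::real. r powr e) \<longlongrightarrow> 0) (at_right 0)" if "e > 0" for e
    by (rule tendsto_zero_powrI) (use that eventually_at_right_less[of "0::real"] in \<open>auto intro: eventually_mono\<close>)
  have ev1: "\<forall>\<^sub>F r in at_right (0::real). 0 < r \<and> r < 1"
    using eventually_at_right_real[of "0::real" 1] by (auto elim: eventually_mono)
  have ev2: "\<forall>\<^sub>F r in at_right (0::real). h r / r powr q' < 1"
    using order_tendstoD(2)[OF hlim, of 1] by (simp add: q'_def)
  have ev3: "\<forall>\<^sub>F r in at_right (0::real). r powr (1 - \<theta>) < 1/2"
    using order_tendstoD(2)[OF pw_lim[of "1 - \<theta>"], of "1/2"] \<theta>1 by simp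
  have evr: "\<forall>\<^sub>F r in at_right (0::real). 0 < r \<and> h r \<le> r \<and> r \<le> 1 \<and> r powr (1 - \<theta>) \<le> 1/2"
    using ev1 ev2 ev3
  proof eventually_elim
    case (elim r)
    then have r: "0 < r" "r < 1" by auto
    have "h r < r powr q'" using elim r by (simp add: field_simps)
    also have "r powr q' \<le> r powr 1" using r q'2 by (intro powr_mono') auto
    finally show ?case using r elim by simp
  qed
  have ev: "\<forall>\<^sub>F z in F. \<bar>discrete_pLap p (h (fst z)) (fst z) (\<lambda>z. norm z powr \<beta>) (snd z)\<bar> \<le>
      K0 TYPE('n) p \<beta> * fst z powr ((\<gamma> - 1) / 2) + K1 TYPE('n) p \<beta> * (h (fst z) * fst z powr (p - 3))
      + K2 TYPE('n) p \<beta> * norm (snd z) powr (\<gamma> - 1)"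
    using eventually_compose_filterlim[OF evr fst_lim] order_tendstoD(2)[OF nsnd_lim zero_less_one]
  proof eventually_elim
    case (elim z)
    then show ?case
      using pointwise[OF p \<beta> hpos[of "fst z"], of "fst z" "snd z"]
      by (simp add: \<gamma>_def \<theta>_def)
  qed
  have U: "((\<lambda>z. K0 TYPE('n) p \<beta> * fst z powr ((\<gamma> - 1) / 2) + K1 TYPE('n) p \<beta> * (h (fst z) * fst z powr (p - 3))
      + K2 TYPE('n) p \<beta> * norm (snd z) powr (\<gamma> - 1)) \<longlongrightarrow> 0) F"
  proof -
    have a: "((\<lambda>z. fst z powr ((\<gamma> - 1) / 2)) \<longlongrightarrow> 0) F"
      using filterlim_compose[OF pw_lim[of "(\<gamma> - 1) / 2"] fst_lim] \<gamma>1 by simp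
    have hl: "((\<lambda>r. h r * r powr (p - 3)) \<longlongrightarrow> 0) (at_right 0)"
    proof -
      have "((\<lambda>r. (h r / r powr q') * r powr (q' + p - 3)) \<longlongrightarrow> 0 * 0) (at_right 0)"
        using hlim pw_lim[of "q' + p - 3"] q'2 p by (intro tendsto_mult) (auto simp: q'_def)
      moreover have "\<forall>\<^sub>F r in at_right (0::real). (h r / r powr q') * r powr (q' + p - 3) = h r * r powr (p - 3)"
        using eventually_at_right_less[of "0::real"]
      proof eventually_elim
        case (elim r)
        have "r powr (q' + p - 3) = r powr (q' + (p - 3))" by (simp add: algebra_simps)
        also have "\<dots> = r powr q' * r powr (p - 3)" by (rule powr_add)
        finally have "r powr (q' + p - 3) = r powr q' * r powr (p - 3)" .
        then show ?case using elim by simp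
      qed
      ultimately show ?thesis by (simp add: tendsto_cong)
    qed
    have b: "((\<lambda>z. h (fst z) * fst z powr (p - 3)) \<longlongrightarrow> 0) F"
      using filterlim_compose[OF hl fst_lim] by simp
    have c: "((\<lambda>z. norm (snd z) powr (\<gamma> - 1)) \<longlongrightarrow> 0) F"
      by (rule tendsto_zero_powrI[OF nsnd_lim]) (use \<gamma>1 in auto)
    have "((\<lambda>z. K0 TYPE('n) p \<beta> * fst z powr ((\<gamma> - 1) / 2) + K1 TYPE('n) p \<beta> * (h (fst z) * fst z powr (p - 3))
      + K2 TYPE('n) p \<beta> * norm (snd z) powr (\<gamma> - 1)) \<longlongrightarrow> 0 + 0 + 0) F"
      by (intro tendsto_add tendsto_mult_right_zero a b c)
    then show ?thesis by simp
  qed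
  have "((\<lambda>z. discrete_pLap p (h (fst z)) (fst z) (\<lambda>z. norm z powr \<beta>) (snd z)) \<longlongrightarrow> 0) F"
    by (rule Lim_null_comparison[OF _ U]) (use ev in simp)
  then show ?thesis by (simp add: F_def case_prod_unfold)
qed


end
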